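(* In the cell FDE setting described in the context, assume (H1), (H2), (H3), that there exists $(\varphi,\psi)\in X_+$ with $\min\{\varphi(0),\psi(0)\}>0$, that $q(0)>0$, that $j(0)=0$, and that there exists $K$ such that $j(\varphi,0)>0$ whenever $(\varphi,\psi)\in U_+$ and $\min_{[-h,0]}\varphi\ge K$. Let $\rho_1(\varphi,\psi):=\varphi(0)$ and $\rho_m(\varphi,\psi):=\min\{\varphi(0),\psi(0)\}$ on $X_+$, and for a function $\rho$ on $X_+$ let $X_0^\rho:=\{\phi\in X_+:\ \rho(S_+(t,\phi))=0\ \text{for all } t\ge0\}$. Then $X_0^{\rho_1}=X_0^{\rho_m}=\{(\varphi,\psi)\in X_+:\ \varphi(0)=0\}$.
   Context: Let $h>0$, $R_-<0$, $I:=(R_-,\infty)$. $\|\phi\|_0:=\max_{\theta\in[-h,0]}|\phi(\theta)|$, $\|\phi\|_1:=\|\phi\|_0+\|\phi'\|_0$; $x_t(s):=x(t+s)$, $s\in[-h,0]$. Let $U:=C^1([-h,0],\mathbb R)\times C^1([-h,0],I)$, $U_+:=C^1([-h,0],[0,\infty)^2)$, $q:I\to\mathbb R$, $j:U\to\mathbb R$, $\mu\ge0$. Cell FDE: $w'(t)=q(v(t))w(t)$, $v'(t)=j(w_t,v_t)-\mu v(t)$, $t>0$, $(w_0,v_0)=(\varphi,\psi)$. $F(\varphi,\psi):=(q(\psi(0))\varphi(0),j(\varphi,\psi)-\mu\psi(0))$, $X:=\{\phi\in U:\phi'(0)=F(\phi)\}$, $X_+:=X\cap U_+$. Solutions are $C^1$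 maps $x=(w,v)$ on $[-h,t_* )$ with $x_0=\phi$, $x_t\in U$, satisfying the equations on $(0,t_* )$. (S): $f$ is $C^1$, each $Df(\phi)$ extends to a linear map on $C([-h,0],\mathbb R^n)$ and $(\phi,\chi)\mapsto D_ef(\phi)\chi$ is continuous. (sLb) on $\mathcal O_+$: for each $\|\cdot\|_1$-bounded $B\subset\mathcal O_+$ there is $L_B$ with $|f(\phi)-f(\chi)|\le L_B\|\phi-\chi\|_0$ on $B$. (H1): $j$ satisfies (S) on $U$, (sLb) on $U_+$, $j\ge0$ on $U_+$, and $j(B_1\times B_2)$ is bounded whenever $B_1\times B_2\subset U_+$ with $B_1$ bounded. (H2): $q$ bounded and $C^1$. (H3): $X_+\neq\emptyset$. Under (H1)-(H3) each $\phi\in X_+$ has a unique solution $x^\phi$ on $[-h,\infty)$ with segments in $X_+$ and $S_+(t,\phi):=x^\phi_t$ is a continuous semiflow on $X_+$. *)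

theory Defs
  imports "HOL-Analysis.Analysis"
begin

text \<open>Convention: an element of C([-h,0],R) or C^1([-h,0],R) is represented by a function
  real => real that vanishes outside [-h,0]. A state is a pair (phi, psi) of such functions.\<close>

type_synonym state = "(real \<Rightarrow> real) \<times> (real \<Rightarrow> real)"

definition zero_out :: "real \<Rightarrow> (real \<Rightarrow> real) \<Rightarrow> bool" where
  "zero_out h f \<longleftrightarrow> (\<forall>s. s \<notin> {-h..0} \<longrightarrow> f s = 0)"

definition Cfun :: "real \<Rightarrow> (real \<Rightarrow> real) \<Rightarrow> bool" where
  "Cfun h f \<longleftrightarrow> zero_out h f \<and> continuous_on {-h..0} f"

definition C1fun :: "real \<Rightarrow> (real \<Rightarrow> real) \<Rightarrow> bool" where
  "C1fun h f \<longleftrightarrow> zero_out h f \<and>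
     (\<exists>f'. continuous_on {-h..0} f' \<and>
        (\<forall>\<theta>\<in>{-h..0}. (f has_real_derivative f' \<theta>) (at \<theta> within {-h..0})))"

definition dr :: "real \<Rightarrow> (real \<Rightarrow> real) \<Rightarrow> real \<Rightarrow> real" where
  "dr h f \<theta> = (if \<theta> \<in> {-h..0} then (THE d. (f has_real_derivative d) (at \<theta> within {-h..0})) else 0)"

definition n0 :: "real \<Rightarrow> (real \<Rightarrow> real) \<Rightarrow> real" where
  "n0 h f = (SUP \<theta>\<in>{-h..0}. \<bar>f \<theta>\<bar>)"

definition n1 :: "real \<Rightarrow> (real \<Rightarrow> real) \<Rightarrow> real" where
  "n1 h f = n0 h f + n0 h (dr h f)"

definition n0p :: "real \<Rightarrow> state \<Rightarrow> real" where
  "n0p h \<phi> = (SUP \<theta>\<in>{-h..0}. norm (fst \<phi> \<theta>, snd \<phi> \<theta>))"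

definition n1p :: "real \<Rightarrow> state \<Rightarrow> real" where
  "n1p h \<phi> = n0p h \<phi> + n0p h (dr h (fst \<phi>), dr h (snd \<phi>))"

definition psub :: "state \<Rightarrow> state \<Rightarrow> state" where
  "psub \<phi> \<xi> = (\<lambda>s. fst \<phi> s - fst \<xi> s, \<lambda>s. snd \<phi> s - snd \<xi> s)"

definition plc :: "real \<Rightarrow> state \<Rightarrow> real \<Rightarrow> state \<Rightarrow> state" where
  "plc a \<phi> b \<xi> = (\<lambda>s. a * fst \<phi> s + b * fst \<xi> s, \<lambda>s. a * snd \<phi> s + b * snd \<xi> s)"

definition Cp :: "real \<Rightarrow> state set" where
  "Cp h = {\<phi>. Cfun h (fst \<phi>) \<and> Cfun h (snd \<phi>)}"

definition C1p :: "real \<Rightarrow> state set" where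
  "C1p h = {\<phi>. C1fun h (fst \<phi>) \<and> C1fun h (snd \<phi>)}"

text \<open>U = C^1([-h,0],R) x C^1([-h,0],I) with I = (R_-, infinity)\<close>
definition Uset :: "real \<Rightarrow> real \<Rightarrow> state set" where
  "Uset h Rm = {\<phi>\<in>C1p h. \<forall>\<theta>\<in>{-h..0}. snd \<phi> \<theta> \<in> {Rm<..}}"

definition Uplus :: "real \<Rightarrow> state set" where
  "Uplus h = {\<phi>\<in>C1p h. \<forall>\<theta>\<in>{-h..0}. fst \<phi> \<theta> \<ge> 0 \<and> snd \<phi> \<theta> \<ge> 0}"

text \<open>Condition (S) for f on U (Frechet C^1 w.r.t. the norm n1p, with derivative Df;
  each Df phi is linear on C([-h,0],R^2) and (phi,chi) |-> Df phi chi is continuous on U x C)\<close>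
definition condS :: "real \<Rightarrow> state set \<Rightarrow> (state \<Rightarrow> real) \<Rightarrow> bool" where
  "condS h Os f \<longleftrightarrow> (\<exists>Df :: state \<Rightarrow> state \<Rightarrow> real.
     (\<forall>\<phi>\<in>Os. \<forall>\<epsilon>>0. \<exists>\<delta>>0. \<forall>\<xi>\<in>Os. n1p h (psub \<xi> \<phi>) < \<delta> \<longrightarrow>
         \<bar>f \<xi> - f \<phi> - Df \<phi> (psub \<xi> \<phi>)\<bar> \<le> \<epsilon> * n1p h (psub \<xi> \<phi>)) \<and>
     (\<forall>\<phi>\<in>Os. \<forall>\<epsilon>>0. \<exists>\<delta>>0. \<forall>\<psi>\<in>Os. n1p h (psub \<psi> \<phi>) < \<delta> \<longrightarrow>
         (\<forall>\<xi>\<in>C1p h. \<bar>Df \<psi> \<xi> - Df \<phi> \<xi>\<bar> \<le> \<epsilon> * n1p h \<xi>)) \<and>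
     (\<forall>\<phi>\<in>Os. \<forall>\<xi>1\<in>Cp h. \<forall>\<xi>2\<in>Cp h. \<forall>a b.
         Df \<phi> (plc a \<xi>1 b \<xi>2) = a * Df \<phi> \<xi>1 + b * Df \<phi> \<xi>2) \<and>
     (\<forall>\<phi>\<in>Os. \<forall>\<xi>\<in>Cp h. \<forall>\<epsilon>>0. \<exists>\<delta>>0. \<forall>\<phi>'\<in>Os. \<forall>\<xi>'\<in>Cp h.
         n1p h (psub \<phi>' \<phi>) < \<delta> \<and> n0p h (psub \<xi>' \<xi>) < \<delta> \<longrightarrow> \<bar>Df \<phi>' \<xi>' - Df \<phi> \<xi>\<bar> < \<epsilon>))"

definition sLb :: "real \<Rightarrow> state set \<Rightarrow> (state \<Rightarrow> real) \<Rightarrow> bool" where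
  "sLb h Os f \<longleftrightarrow> (\<forall>B\<subseteq>Os. (\<exists>M. \<forall>\<phi>\<in>B. n1p h \<phi> \<le> M) \<longrightarrow>
      (\<exists>L. \<forall>\<phi>\<in>B. \<forall>\<xi>\<in>B. \<bar>f \<phi> - f \<xi>\<bar> \<le> L * n0p h (psub \<phi> \<xi>)))"

definition H1 :: "real \<Rightarrow> real \<Rightarrow> (state \<Rightarrow> real) \<Rightarrow> bool" where
  "H1 h Rm j \<longleftrightarrow> condS h (Uset h Rm) j \<and> sLb h (Uplus h) j \<and>
     (\<forall>\<phi>\<in>Uplus h. j \<phi> \<ge> 0) \<and>
     (\<forall>B1 B2. B1 \<times> B2 \<subseteq> Uplus h \<longrightarrow> (\<exists>M. \<forall>f\<in>B1. n1 h f \<le> M) \<longrightarrow>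
         (\<exists>M. \<forall>\<phi>\<in>B1 \<times> B2. \<bar>j \<phi>\<bar> \<le> M))"

definition H2 :: "real \<Rightarrow> (real \<Rightarrow> real) \<Rightarrow> bool" where
  "H2 Rm q \<longleftrightarrow> (\<exists>M. \<forall>x\<in>{Rm<..}. \<bar>q x\<bar> \<le> M) \<and>
     (\<exists>q'. continuous_on {Rm<..} q' \<and> (\<forall>x\<in>{Rm<..}. (q has_real_derivative q' x) (at x)))"

definition Fmap :: "(real \<Rightarrow> real) \<Rightarrow> (state \<Rightarrow> real) \<Rightarrow> real \<Rightarrow> state \<Rightarrow> real \<times> real" where
  "Fmap q j \<mu> \<phi> = (q (snd \<phi> 0) * fst \<phi> 0, j \<phi> - \<mu> * snd \<phi> 0)"

definition Xset :: "real \<Rightarrow> real \<Rightarrow> (real \<Rightarrow> real) \<Rightarrow> (state \<Rightarrow> real) \<Rightarrow> real \<Rightarrow> state set" where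
  "Xset h Rm q j \<mu> = {\<phi>\<in>Uset h Rm. (dr h (fst \<phi>) 0, dr h (snd \<phi>) 0) = Fmap q j \<mu> \<phi>}"

definition Xplus :: "real \<Rightarrow> real \<Rightarrow> (real \<Rightarrow> real) \<Rightarrow> (state \<Rightarrow> real) \<Rightarrow> real \<Rightarrow> state set" where
  "Xplus h Rm q j \<mu> = Xset h Rm q j \<mu> \<inter> Uplus h"

definition seg :: "real \<Rightarrow> state \<Rightarrow> real \<Rightarrow> state" where
  "seg h x t = ((\<lambda>s. if s \<in> {-h..0} then fst x (t + s) else 0),
                (\<lambda>s. if s \<in> {-h..0} then snd x (t + s) else 0))"

definition is_sol :: "real \<Rightarrow> real \<Rightarrow> (real \<Rightarrow> real) \<Rightarrow> (state \<Rightarrow> real) \<Rightarrow> real \<Rightarrow> state \<Rightarrow> state \<Rightarrow> bool" where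
  "is_sol h Rm q j \<mu> \<phi> x \<longleftrightarrow>
     (\<exists>w' v'. continuous_on {-h..} w' \<and> continuous_on {-h..} v' \<and>
        (\<forall>t\<ge>-h. (fst x has_real_derivative w' t) (at t within {-h..}) \<and>
                 (snd x has_real_derivative v' t) (at t within {-h..})) \<and>
        (\<forall>t>0. w' t = q (snd x t) * fst x t \<and>
               v' t = j (seg h x t) - \<mu> * snd x t)) \<and>
     seg h x 0 = \<phi> \<and> (\<forall>t\<ge>0. seg h x t \<in> Uset h Rm)"

definition Splus :: "real \<Rightarrow> real \<Rightarrow> (real \<Rightarrow> real) \<Rightarrow> (state \<Rightarrow> real) \<Rightarrow> real \<Rightarrow> real \<Rightarrow> state \<Rightarrow> state" where
  "Splus h Rm q j \<mu> t \<phi> = (THE y. \<exists>x. is_sol h Rm q j \<mu> \<phi> x \<and>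
       (\<forall>s\<ge>0. seg h x s \<in> Xplus h Rm q j \<mu>) \<and> y = seg h x t)"

definition X0 :: "real \<Rightarrow> real \<Rightarrow> (real \<Rightarrow> real) \<Rightarrow> (state \<Rightarrow> real) \<Rightarrow> real \<Rightarrow> (state \<Rightarrow> real) \<Rightarrow> state set" where
  "X0 h Rm q j \<mu> \<rho> = {\<phi>\<in>Xplus h Rm q j \<mu>. \<forall>t\<ge>0. \<rho> (Splus h Rm q j \<mu> t \<phi>) = 0}"

definition rho1 :: "state \<Rightarrow> real" where "rho1 \<phi> = fst \<phi> 0"
definition rhom :: "state \<Rightarrow> real" where "rhom \<phi> = min (fst \<phi> 0) (snd \<phi> 0)"

end

theory Submission
  imports Defs
begin

lemma dr_eq:
  assumes "h > 0" "\<theta> \<in> {-h..0}" "(f has_real_derivative d) (at \<theta> within {-h..0})"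
  shows "dr h f \<theta> = d"
proof -
  have nb: "at \<theta> within {-h..0} \<noteq> bot"
    using assms(1,2) by (auto simp: trivial_limit_within intro!: islimpt_closure_open[where s="{-h<..<0}"])
  have "(THE d. (f has_real_derivative d) (at \<theta> within {-h..0})) = d"
    using assms(3) has_field_derivative_unique[OF _ _ nb] by blast
  then show ?thesis using assms(2) by (simp add: dr_def)
qed

lemma nb_within: 
  fixes S :: "real set"
  assumes "x \<in> S" "convex S" "y \<in> S" "y \<noteq> x"
  shows "at x within S \<noteq> bot"
proof -
  have "x islimpt S"
  proof (rule islimpt_approachable_real[THEN iffD2], intro allI impI)
    fix e :: real assume e: "e > 0"
    define t where "t = min (1/2) (e / (2 * \<bar>y - x\<bar>))"
    have t: "0 < t" using e assms by (auto simp: t_def)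
    have t2: "t \<le> 1/2" unfolding t_def by (rule min.cobounded1)
    have t3: "t \<le> e / (2 * \<bar>y - x\<bar>)" unfolding t_def by (rule min.cobounded2)
    have "x + t * (y - x) \<in> S"
      using convexD[OF assms(2) assms(3) assms(1), of t "1 - t"] t t2
      by (auto simp: algebra_simps)
    moreover have "x + t * (y - x) \<noteq> x" using t assms by auto
    moreover have "\<bar>x + t * (y - x) - x\<bar> < e"
    proof -
      have "\<bar>x + t * (y - x) - x\<bar> = t * \<bar>y - x\<bar>" using t by (simp add: abs_mult)
      also have "\<dots> \<le> e / (2 * \<bar>y - x\<bar>) * \<bar>y - x\<bar>"
        using t3 by (intro mult_right_mono) auto
      also have "\<dots> = e/2" using assms by auto
      finally show ?thesis using e by simp
    qed
    ultimately show "\<exists>x'\<in>S. x' \<noteq> x \<and> \<bar>x' - x\<bar> < e" by blast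
  qed
  then show ?thesis by (simp add: trivial_limit_within)
qed

lemma C1fun_dr:
  assumes "h > 0" "C1fun h f"
  shows "continuous_on {-h..0} (dr h f)"
    "\<And>\<theta>. \<theta> \<in> {-h..0} \<Longrightarrow> (f has_real_derivative dr h f \<theta>) (at \<theta> within {-h..0})"
proof -
  obtain f' where f': "continuous_on {-h..0} f'" "\<And>\<theta>. \<theta>\<in>{-h..0} \<Longrightarrow> (f has_real_derivative f' \<theta>) (at \<theta> within {-h..0})"
    using assms(2) unfolding C1fun_def by blast
  have e: "\<And>\<theta>. \<theta> \<in> {-h..0} \<Longrightarrow> dr h f \<theta> = f' \<theta>" using dr_eq[OF assms(1)] f'(2) by blast
  show "continuous_on {-h..0} (dr h f)" using continuous_on_eq[OF f'(1)] e by metis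
  show "\<And>\<theta>. \<theta> \<in> {-h..0} \<Longrightarrow> (f has_real_derivative dr h f \<theta>) (at \<theta> within {-h..0})"
    using e f'(2) by metis
qed

lemma n0_le:
  assumes "h \<ge> 0" "\<And>\<theta>. \<theta> \<in> {-h..0} \<Longrightarrow> \<bar>f \<theta>\<bar> \<le> M"
  shows "n0 h f \<le> M"
  unfolding n0_def using assms by (intro cSUP_least) auto

lemma n0p_le:
  assumes "h \<ge> 0" "\<And>\<theta>. \<theta> \<in> {-h..0} \<Longrightarrow> \<bar>fst \<phi> \<theta>\<bar> + \<bar>snd \<phi> \<theta>\<bar> \<le> M"
  shows "n0p h \<phi> \<le> M"
  unfolding n0p_def using assms
  by (intro cSUP_least) (auto intro: order_trans[OF norm_Pair_le])

lemma FTC0: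
  fixes f :: "real \<Rightarrow> real"
  assumes "continuous_on {0..} f" "t \<ge> 0"
  shows "((\<lambda>t. integral {0..t} f) has_real_derivative f t) (at t within {0..})"
proof -
  have "((\<lambda>t. integral {0..t} f) has_real_derivative f t) (at t within {0..t+1})"
    by (rule integral_has_real_derivative) (use assms in \<open>auto intro: continuous_on_subset\<close>)
  moreover have "at t within {0..t+1} = at t within {0..}"
    by (rule at_within_nhd[where S="{..<t+1}"]) auto
  ultimately show ?thesis by simp
qed

lemma deriv_piece:
  fixes S :: "real set"
  assumes "closed S" "t \<notin> S"
  shows "(f has_real_derivative d) (at t within S)"
proof -
  have "\<not> t islimpt S" using assms closed_limpt by blast
  then have "at t within S = bot" by (simp add: trivial_limit_within)
  then show ?thesis by (simp add: has_field_derivative_iff)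
qed

lemma glue:
  fixes f g f' g' :: "real \<Rightarrow> real"
  assumes h: "h \<ge> 0"
    and fd: "\<And>t. t\<in>{-h..0} \<Longrightarrow> (f has_real_derivative f' t) (at t within {-h..0})"
    and fc: "continuous_on {-h..0} f'"
    and gd: "\<And>t. t \<ge> 0 \<Longrightarrow> (g has_real_derivative g' t) (at t within {0..})"
    and gc: "continuous_on {0..} g'"
    and e0: "f 0 = g 0" and e1: "f' 0 = g' 0"
  shows "\<And>t. t \<ge> -h \<Longrightarrow> ((\<lambda>t. if t \<le> 0 then f t else g t) has_real_derivative
            (if t \<le> 0 then f' t else g' t)) (at t within {-h..})"
    and "continuous_on {-h..} (\<lambda>t. if t \<le> 0 then f' t else g' t)"
proof -
  let ?F = "\<lambda>t. if t \<le> 0 then f t else g t"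
  let ?F' = "\<lambda>t. if t \<le> (0::real) then f' t else g' t"
  have U: "{-h..} = {-h..0} \<union> {0::real..}" using h by auto
  fix t :: real assume t: "t \<ge> -h"
  have A: "(?F has_real_derivative ?F' t) (at t within {-h..0})"
  proof (cases "t \<le> 0")
    case True
    then have "t \<in> {-h..0}" using t by auto
    from has_field_derivative_transform_within[OF fd[OF this] zero_less_one this]
    show ?thesis using True by auto
  qed (auto intro: deriv_piece)
  have B: "(?F has_real_derivative ?F' t) (at t within {0..})"
  proof (cases "t \<ge> 0")
    case True
    then have tt: "t \<in> {0..}" by auto
    have "(g has_real_derivative ?F' t) (at t within {0..})"
      using gd[OF True] e1 True by (cases "t = 0") auto
    from has_field_derivative_transform_within[OF this zero_less_one tt, of ?F]
    show ?thesis using e0 by auto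
  qed (auto intro: deriv_piece)
  show "(?F has_real_derivative ?F' t) (at t within {-h..})"
    using A B unfolding U has_field_derivative_iff Lim_within_Un by blast
next
  have "continuous_on ({-h..0} \<union> {0..}) (\<lambda>t. if t \<le> (0::real) then f' t else g' t)"
  proof (rule continuous_on_closed_Un)
    show "continuous_on {-h..0} (\<lambda>t. if t \<le> (0::real) then f' t else g' t)"
      by (rule continuous_on_eq[OF fc]) auto
    show "continuous_on {0..} (\<lambda>t. if t \<le> (0::real) then f' t else g' t)"
      by (rule continuous_on_eq[OF gc]) (use e1 in \<open>auto simp: antisym\<close>)
  qed auto
  moreover have "{-h..} = {-h..0} \<union> {0::real..}" using h by auto
  ultimately show "continuous_on {-h..} (\<lambda>t. if t \<le> 0 then f' t else g' t)" by simp
qed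

lemma seg_comp:
  fixes X X' :: "real \<Rightarrow> real"
  assumes h: "h > 0" and t: "t \<ge> 0"
    and Xd: "\<And>s. s \<ge> -h \<Longrightarrow> (X has_real_derivative X' s) (at s within {-h..})"
    and Xc: "continuous_on {-h..} X'"
  shows "C1fun h (\<lambda>s. if s \<in> {-h..0} then X (t+s) else 0)"
    and "\<And>\<theta>. \<theta> \<in> {-h..0} \<Longrightarrow> dr h (\<lambda>s. if s \<in> {-h..0} then X (t+s) else 0) \<theta> = X' (t+\<theta>)"
proof -
  let ?f = "\<lambda>s. if s \<in> {-h..0} then X (t+s) else 0"
  have D: "(?f has_real_derivative X' (t+\<theta>)) (at \<theta> within {-h..0})" if th: "\<theta> \<in> {-h..0}" for \<theta>
  proof -
    have "(X has_real_derivative X' (t+\<theta>)) (at (t+\<theta>) within ((\<lambda>s. t+s) ` {-h..0}))"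
      by (rule has_field_derivative_subset[OF Xd]) (use th t in auto)
    moreover have "((\<lambda>s. t+s) has_real_derivative 1) (at \<theta> within {-h..0})"
      by (auto intro!: derivative_eq_intros)
    ultimately have "(X \<circ> (\<lambda>s. t+s) has_real_derivative X' (t+\<theta>) * 1) (at \<theta> within {-h..0})"
      by (rule DERIV_image_chain)
    from has_field_derivative_transform_within[OF this zero_less_one th, of ?f]
    show ?thesis by auto
  qed
  have C: "continuous_on {-h..0} (\<lambda>\<theta>. X' (t+\<theta>))"
    by (rule continuous_on_compose2[OF Xc]) (use t in \<open>auto intro!: continuous_intros\<close>)
  show "C1fun h ?f" unfolding C1fun_def zero_out_def
    by (intro conjI allI impI exI[of _ "\<lambda>\<theta>. X' (t+\<theta>)"]) (use D C in auto)
  show "\<And>\<theta>. \<theta> \<in> {-h..0} \<Longrightarrow> dr h ?f \<theta> = X' (t+\<theta>)"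
    using dr_eq[OF h] D by blast
qed

lemma n0p_between:
  assumes "h \<ge> 0" "\<And>\<theta>. \<theta> \<in> {-h..0} \<Longrightarrow> \<bar>fst \<phi> \<theta>\<bar> + \<bar>snd \<phi> \<theta>\<bar> \<le> M"
  shows "0 \<le> n0p h \<phi>" "n0p h \<phi> \<le> M"
proof -
  have bdd: "bdd_above ((\<lambda>\<theta>. norm (fst \<phi> \<theta>, snd \<phi> \<theta>)) ` {-h..0})"
    by (rule bdd_aboveI2[of _ _ M]) (use assms in \<open>auto intro: order_trans[OF norm_Pair_le]\<close>)
  have "norm (fst \<phi> 0, snd \<phi> 0) \<le> n0p h \<phi>"
    unfolding n0p_def by (rule cSUP_upper[OF _ bdd]) (use assms in auto)
  then show "0 \<le> n0p h \<phi>" by (meson norm_ge_zero order_trans)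
  show "n0p h \<phi> \<le> M" by (rule n0p_le[OF assms])
qed

lemma cont_on_ge0:
  fixes f :: "real \<Rightarrow> real"
  assumes "\<And>T. T > 0 \<Longrightarrow> continuous_on {0..T} f"
  shows "continuous_on {0..} f"
  unfolding continuous_on_eq_continuous_within
proof
  fix x :: real assume x: "x \<in> {0..}"
  have "continuous (at x within {0..x+1}) f"
    using assms[of "x+1"] x by (auto simp: continuous_on_eq_continuous_within)
  moreover have "at x within {0..x+1} = at x within {0..}"
    by (rule at_within_nhd[where S="{..<x+1}"]) auto
  ultimately show "continuous (at x within {0..}) f" by simp
qed

lemma small_zero:
  fixes z A :: real
  assumes "\<And>n. \<bar>z\<bar> \<le> A / 2^n"
  shows "z = 0"
proof -
  have l: "(\<lambda>n. A / 2^n) \<longlonglongrightarrow> 0" by (rule LIMSEQ_divide_realpow_zero) simp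
  have "\<exists>N. \<forall>n\<ge>N. \<bar>z\<bar> \<le> A / 2^n" using assms by blast
  from LIMSEQ_le_const[OF l this] have "\<bar>z\<bar> \<le> 0" .
  then show ?thesis by simp
qed

lemma geom_conv:
  fixes x :: "nat \<Rightarrow> real"
  assumes "\<And>n. \<bar>x (Suc n) - x n\<bar> \<le> c / 2^n"
  shows "convergent x" "\<And>n. \<bar>lim x - x n\<bar> \<le> 2 * c / 2^n"
proof -
  have k: "\<bar>x (n+k) - x n\<bar> \<le> 2 * c / 2^n - 2 * c / 2^(n+k)" for n k
  proof (induction k)
    case 0 then show ?case by simp
  next
    case (Suc k)
    have e: "x (n + Suc k) - x n = (x (n+k) - x n) + (x (Suc (n+k)) - x (n+k))" by simp
    have 1: "\<bar>x (n + Suc k) - x n\<bar> \<le> \<bar>x (n+k) - x n\<bar> + \<bar>x (Suc (n+k)) - x (n+k)\<bar>"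
      unfolding e by (rule abs_triangle_ineq)
    have p: "(2::real)^(n + Suc k) = 2 * 2^(n+k)" by simp
    have "2 * c / 2^(n + Suc k) = c / 2^(n+k)" unfolding p by simp
    with 1 Suc.IH assms[of "n+k"] show ?case by linarith
  qed
  have c0: "c \<ge> 0"
  proof -
    have "c / 2^0 = c" by simp
    then show ?thesis using assms[of 0] abs_ge_zero[of "x (Suc 0) - x 0"] by linarith
  qed
  have m: "\<bar>x m - x n\<bar> \<le> 2 * c / 2^n" if "m \<ge> n" for m n
  proof -
    from le_Suc_ex[OF that] obtain k where mk: "m = n + k" ..
    have nn: "2 * c / 2^(n+k) \<ge> 0" by (rule divide_nonneg_nonneg) (use c0 in auto)
    show ?thesis unfolding mk using k[of n k] nn by linarith
  qed
  have lim0: "(\<lambda>n. 2 * c / 2^n) \<longlonglongrightarrow> 0"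
    by (rule LIMSEQ_divide_realpow_zero) simp
  show cv: "convergent x"
  proof (rule Cauchy_convergent, rule metric_CauchyI)
    fix e :: real assume e: "e > 0"
    from LIMSEQ_D[OF lim0 e] obtain N where N: "\<And>n. n \<ge> N \<Longrightarrow> norm (2 * c / 2^n - 0) < e"
      by blast
    show "\<exists>M. \<forall>m\<ge>M. \<forall>n\<ge>M. dist (x m) (x n) < e"
    proof (intro exI allI impI)
      fix m n assume mn: "m \<ge> N" "n \<ge> N"
      have "dist (x m) (x n) \<le> 2 * c / 2^(min m n)"
      proof (cases "m \<le> n")
        case True
        then have "\<bar>x n - x m\<bar> \<le> 2 * c / 2^m" by (rule m)
        then show ?thesis using True by (simp add: dist_real_def abs_minus_commute min_def)
      next
        case False
        then have "\<bar>x m - x n\<bar> \<le> 2 * c / 2^n" by (intro m) simp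
        then show ?thesis using False by (simp add: dist_real_def min_def)
      qed
      also have "\<dots> < e" using N[of "min m n"] mn c0 by simp
      finally show "dist (x m) (x n) < e" .
    qed
  qed
  fix n
  have "(\<lambda>m. \<bar>x m - x n\<bar>) \<longlonglongrightarrow> \<bar>lim x - x n\<bar>"
    using cv by (intro tendsto_rabs tendsto_diff tendsto_const) (simp add: convergent_LIMSEQ_iff)
  moreover have "\<exists>N. \<forall>m\<ge>N. \<bar>x m - x n\<bar> \<le> 2 * c / 2^n"
  proof (intro exI[of _ n] allI impI)
    fix m' assume "n \<le> m'"
    then show "\<bar>x m' - x n\<bar> \<le> 2 * c / 2^n" by (rule m)
  qed
  ultimately show "\<bar>lim x - x n\<bar> \<le> 2 * c / 2^n"
    by (rule LIMSEQ_le_const2)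
qed

locale cellphi =
  fixes h Rm \<mu> :: real and q :: "real \<Rightarrow> real" and j :: "state \<Rightarrow> real" and a b :: "real \<Rightarrow> real"
  assumes hpos: "h > 0" and Rmneg: "Rm < 0" and mupos: "\<mu> \<ge> 0" and H1: "H1 h Rm j" and H2: "H2 Rm q"
    and phiX: "(a, b) \<in> Xplus h Rm q j \<mu>"
begin

lemma aC1: "C1fun h a" and bC1: "C1fun h b"
  and a_nn: "\<And>\<theta>. \<theta> \<in> {-h..0} \<Longrightarrow> a \<theta> \<ge> 0" and b_nn: "\<And>\<theta>. \<theta> \<in> {-h..0} \<Longrightarrow> b \<theta> \<ge> 0"
  and a_comp: "dr h a 0 = q (b 0) * a 0" and b_comp: "dr h b 0 = j (a, b) - \<mu> * b 0"
  and phiU: "(a, b) \<in> Uplus h"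
  using phiX by (auto simp: Xplus_def Xset_def Uset_def Uplus_def C1p_def Fmap_def)

lemma a_zero: "s \<notin> {-h..0} \<Longrightarrow> a s = 0" and b_zero: "s \<notin> {-h..0} \<Longrightarrow> b s = 0"
  using aC1 bC1 by (auto simp: C1fun_def zero_out_def)

lemma a_nn': "a s \<ge> 0" using a_nn a_zero by (cases "s \<in> {-h..0}") auto
lemma b_nn': "b s \<ge> 0" using b_nn b_zero by (cases "s \<in> {-h..0}") auto

lemma j_nn: "\<phi> \<in> Uplus h \<Longrightarrow> j \<phi> \<ge> 0" using H1 by (auto simp: H1_def)

lemma q_bound: obtains Q where "Q \<ge> 0" "\<And>x. x > Rm \<Longrightarrow> \<bar>q x\<bar> \<le> Q"
proof -
  obtain M where M: "\<forall>x\<in>{Rm<..}. \<bar>q x\<bar> \<le> M" using H2 by (auto simp: H2_def)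
  show ?thesis
  proof (rule that[of "max M 0"])
    fix x assume "x > Rm"
    then have "\<bar>q x\<bar> \<le> M" using M by auto
    then show "\<bar>q x\<bar> \<le> max M 0" by linarith
  qed auto
qed

lemma q_deriv: obtains q' where "continuous_on {Rm<..} q'" "\<And>x. x > Rm \<Longrightarrow> (q has_real_derivative q' x) (at x)"
  using H2 by (auto simp: H2_def)

lemma q_cont: "continuous_on {Rm<..} q"
proof -
  obtain q' where "\<And>x. x > Rm \<Longrightarrow> (q has_real_derivative q' x) (at x)" using q_deriv by blast
  then show ?thesis by (intro has_real_derivative_imp_continuous_on) auto
qed

lemma q_lip: obtains Lq where "Lq \<ge> 0" "\<And>x y. x \<in> {0..M} \<Longrightarrow> y \<in> {0..M} \<Longrightarrow> \<bar>q x - q y\<bar> \<le> Lq * \<bar>x - y\<bar>"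
proof -
  obtain q' where q'c: "continuous_on {Rm<..} q'" and q'd: "\<And>x. x > Rm \<Longrightarrow> (q has_real_derivative q' x) (at x)"
    using q_deriv by blast
  have "continuous_on {0..M} q'" by (rule continuous_on_subset[OF q'c]) (use Rmneg in auto)
  then have "compact (q' ` {0..M})" by (rule compact_continuous_image) simp
  then have "bounded (q' ` {0..M})" by (rule compact_imp_bounded)
  then obtain D0 where D0: "\<forall>x\<in>q' ` {0..M}. norm x \<le> D0" unfolding bounded_iff by blast
  have D: "\<bar>q' x\<bar> \<le> D0" if "x \<in> {0..M}" for x using D0 that by auto
  have main: "\<bar>q x - q y\<bar> \<le> max D0 0 * \<bar>x - y\<bar>" if xy: "x \<in> {0..M}" "y \<in> {0..M}" "x < y" for x y
  proof -
    obtain z where z: "x < z" "z < y" "q y - q x = (y - x) * q' z"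
      using MVT2[OF xy(3), of q q'] q'd xy Rmneg by force
    have "z \<in> {0..M}" using z xy by auto
    then have "\<bar>q' z\<bar> \<le> max D0 0" using D by force
    then have "\<bar>q y - q x\<bar> \<le> \<bar>y - x\<bar> * max D0 0" unfolding z(3) abs_mult by (intro mult_left_mono) auto
    then show ?thesis by (simp add: abs_minus_commute mult.commute)
  qed
  show ?thesis
  proof (rule that[of "max D0 0"])
    fix x y assume xy: "x \<in> {0..M}" "y \<in> {0..M}"
    consider "x < y" | "x = y" | "y < x" by linarith
    then show "\<bar>q x - q y\<bar> \<le> max D0 0 * \<bar>x - y\<bar>"
    proof cases
      case 3 then show ?thesis using main[of y x] xy by (simp add: abs_minus_commute)
    qed (use main xy in auto)
  qed auto
qed

definition Wp :: "(real \<Rightarrow> real) \<Rightarrow> real \<Rightarrow> real" where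
  "Wp V t = a 0 * exp (integral {0..t} (\<lambda>s. q (V s)))"
definition Wf :: "(real \<Rightarrow> real) \<Rightarrow> real \<Rightarrow> real" where
  "Wf V t = (if t \<le> 0 then a t else Wp V t)"
definition Wd :: "(real \<Rightarrow> real) \<Rightarrow> real \<Rightarrow> real" where
  "Wd V t = (if t \<le> 0 then dr h a t else q (V t) * Wp V t)"
definition xs :: "(real \<Rightarrow> real) \<Rightarrow> state" where
  "xs V = (Wf V, V)"
definition gf :: "(real \<Rightarrow> real) \<Rightarrow> real \<Rightarrow> real" where
  "gf V s = j (seg h (xs V) s)"
definition Tp :: "(real \<Rightarrow> real) \<Rightarrow> real \<Rightarrow> real" where
  "Tp V t = exp (- \<mu> * t) * (b 0 + integral {0..t} (\<lambda>s. exp (\<mu> * s) * gf V s))"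
definition Tf :: "(real \<Rightarrow> real) \<Rightarrow> real \<Rightarrow> real" where
  "Tf V t = (if t \<le> 0 then b t else Tp V t)"
definition Td :: "(real \<Rightarrow> real) \<Rightarrow> real \<Rightarrow> real" where
  "Td V t = (if t \<le> 0 then dr h b t else gf V t - \<mu> * Tp V t)"
definition good :: "(real \<Rightarrow> real) \<Rightarrow> (real \<Rightarrow> real) \<Rightarrow> bool" where
  "good V V' \<longleftrightarrow> (\<forall>t\<le>0. V t = b t) \<and> continuous_on {-h..} V' \<and>
     (\<forall>t\<ge>-h. (V has_real_derivative V' t) (at t within {-h..})) \<and> (\<forall>t\<ge>0. V t \<ge> 0)"

lemma goodD:
  assumes "good V V'"
  shows "\<And>t. t \<le> 0 \<Longrightarrow> V t = b t" "continuous_on {-h..} V'"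
    "\<And>t. t \<ge> -h \<Longrightarrow> (V has_real_derivative V' t) (at t within {-h..})"
    "\<And>t. t \<ge> 0 \<Longrightarrow> V t \<ge> 0"
  using assms by (auto simp: good_def)

lemma good_cont: "good V V' \<Longrightarrow> continuous_on {-h..} V"
  by (rule DERIV_continuous_on[of _ _ V']) (auto dest: goodD)

lemma good_nn: "good V V' \<Longrightarrow> V t \<ge> 0"
  using goodD(1,4)[of V V' t] b_nn'[of t] by (cases "t \<le> 0") auto

lemma qV_cont:
  assumes "good V V'"
  shows "continuous_on {0..} (\<lambda>s. q (V s))"
proof -
  have "continuous_on {0..} V" by (rule continuous_on_subset[OF good_cont[OF assms]]) (use hpos in auto)
  moreover have "V ` {0..} \<subseteq> {Rm<..}" using good_nn[OF assms] Rmneg by (auto intro: less_le_trans)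
  ultimately show ?thesis by (rule continuous_on_compose2[OF q_cont])
qed

lemma Wp_deriv:
  assumes "good V V'" "t \<ge> 0"
  shows "(Wp V has_real_derivative q (V t) * Wp V t) (at t within {0..})"
proof -
  have I: "((\<lambda>t. integral {0..t} (\<lambda>s. q (V s))) has_real_derivative q (V t)) (at t within {0..})"
    by (rule FTC0[OF qV_cont[OF assms(1)] assms(2)])
  have "((\<lambda>t. a 0 * exp (integral {0..t} (\<lambda>s. q (V s)))) has_real_derivative
          a 0 * (exp (integral {0..t} (\<lambda>s. q (V s))) * q (V t))) (at t within {0..})"
    by (intro DERIV_cmult DERIV_chain2[OF DERIV_exp I])
  then show ?thesis unfolding Wp_def[abs_def] by (simp add: algebra_simps)
qed

lemma Wp0: "Wp V 0 = a 0" by (simp add: Wp_def)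

lemma W_good:
  assumes "good V V'"
  shows "\<And>t. t \<ge> -h \<Longrightarrow> (Wf V has_real_derivative Wd V t) (at t within {-h..})"
    "continuous_on {-h..} (Wd V)"
proof -
  have Wpc: "continuous_on {0..} (Wp V)"
    by (rule DERIV_continuous_on[of _ _ "\<lambda>t. q (V t) * Wp V t"]) (use Wp_deriv[OF assms] in auto)
  have gc: "continuous_on {0..} (\<lambda>t. q (V t) * Wp V t)"
    by (intro continuous_intros qV_cont[OF assms] Wpc)
  have e1: "dr h a 0 = q (V 0) * Wp V 0" using a_comp goodD(1)[OF assms, of 0] by (simp add: Wp0)
  note G = glue[of h a "dr h a" "Wp V" "\<lambda>t. q (V t) * Wp V t", OF _ C1fun_dr(2)[OF hpos aC1] C1fun_dr(1)[OF hpos aC1]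
      Wp_deriv[OF assms] gc _ e1]
  show "\<And>t. t \<ge> -h \<Longrightarrow> (Wf V has_real_derivative Wd V t) (at t within {-h..})"
    using G(1) hpos unfolding Wf_def[abs_def] Wd_def[abs_def] by (simp add: Wp0)
  show "continuous_on {-h..} (Wd V)"
    using G(2) hpos unfolding Wf_def[abs_def] Wd_def[abs_def] by (simp add: Wp0)
qed

lemma Wf_nn: "Wf V t \<ge> 0"
  using a_nn'[of t] a_nn'[of 0] by (auto simp: Wf_def Wp_def)

lemma seg_fst: "fst (seg h (xs V) t) = (\<lambda>s. if s \<in> {-h..0} then Wf V (t+s) else 0)"
  and seg_snd: "snd (seg h (xs V) t) = (\<lambda>s. if s \<in> {-h..0} then V (t+s) else 0)"
  unfolding seg_def xs_def fst_conv snd_conv by (rule refl)+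

lemma seg0: "good V V' \<Longrightarrow> seg h (xs V) 0 = (a, b)"
  using goodD(1)[of V V'] a_zero b_zero
  by (auto simp: seg_def xs_def Wf_def fun_eq_iff)

lemma seg_props:
  assumes "good V V'" "t \<ge> 0"
  shows "seg h (xs V) t \<in> Uplus h"
    "\<And>\<theta>. \<theta> \<in> {-h..0} \<Longrightarrow> dr h (fst (seg h (xs V) t)) \<theta> = Wd V (t+\<theta>)"
    "\<And>\<theta>. \<theta> \<in> {-h..0} \<Longrightarrow> dr h (snd (seg h (xs V) t)) \<theta> = V' (t+\<theta>)"
proof -
  note S1 = seg_comp[OF hpos assms(2) W_good(1)[OF assms(1)] W_good(2)[OF assms(1)]]
  note S2 = seg_comp[OF hpos assms(2) goodD(3)[OF assms(1)] goodD(2)[OF assms(1)]]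
  show "seg h (xs V) t \<in> Uplus h"
    using S1(1) S2(1) Wf_nn good_nn[OF assms(1)] by (auto simp: Uplus_def C1p_def seg_fst seg_snd)
  show "\<And>\<theta>. \<theta> \<in> {-h..0} \<Longrightarrow> dr h (fst (seg h (xs V) t)) \<theta> = Wd V (t+\<theta>)"
    unfolding seg_fst by (rule S1(2))
  show "\<And>\<theta>. \<theta> \<in> {-h..0} \<Longrightarrow> dr h (snd (seg h (xs V) t)) \<theta> = V' (t+\<theta>)"
    unfolding seg_snd by (rule S2(2))
qed

lemma gf_nn: "good V V' \<Longrightarrow> s \<ge> 0 \<Longrightarrow> gf V s \<ge> 0"
  unfolding gf_def by (rule j_nn, rule seg_props(1))

lemma gf0: "good V V' \<Longrightarrow> gf V 0 = j (a, b)"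
  unfolding gf_def using seg0 by simp

end

context cellphi begin

lemma seg_bounds:
  assumes g: "good V V'" and T: "T \<ge> 0" and t: "t \<in> {0..T}"
    and M: "\<And>r. r \<in> {-h..T} \<Longrightarrow> \<bar>Wf V r\<bar> \<le> M \<and> \<bar>Wd V r\<bar> \<le> M \<and> \<bar>V r\<bar> \<le> M \<and> \<bar>V' r\<bar> \<le> M"
  shows "n1p h (seg h (xs V) t) \<le> 4 * M" "n1 h (fst (seg h (xs V) t)) \<le> 2 * M"
proof -
  have tt: "t + \<theta> \<in> {-h..T}" if "\<theta> \<in> {-h..0}" for \<theta> using that t by auto
  have h0: "h \<ge> 0" using hpos by simp
  have A: "n0p h (seg h (xs V) t) \<le> 2 * M"
  proof (rule n0p_le[OF h0])
    fix \<theta> assume th: "\<theta> \<in> {-h..0}"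
    show "\<bar>fst (seg h (xs V) t) \<theta>\<bar> + \<bar>snd (seg h (xs V) t) \<theta>\<bar> \<le> 2 * M"
      using M[OF tt[OF th]] th unfolding seg_fst seg_snd by auto
  qed
  have B: "n0p h (dr h (fst (seg h (xs V) t)), dr h (snd (seg h (xs V) t))) \<le> 2 * M"
  proof (rule n0p_le[OF h0])
    fix \<theta> assume th: "\<theta> \<in> {-h..0}"
    show "\<bar>fst (dr h (fst (seg h (xs V) t)), dr h (snd (seg h (xs V) t))) \<theta>\<bar> +
          \<bar>snd (dr h (fst (seg h (xs V) t)), dr h (snd (seg h (xs V) t))) \<theta>\<bar> \<le> 2 * M"
      using M[OF tt[OF th]] seg_props(2,3)[OF g _ th, of t] t by auto
  qed
  show "n1p h (seg h (xs V) t) \<le> 4 * M" unfolding n1p_def using A B by simp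
  have C: "n0 h (fst (seg h (xs V) t)) \<le> M"
    by (rule n0_le[OF h0]) (use M tt in \<open>auto simp: seg_fst\<close>)
  have D: "n0 h (dr h (fst (seg h (xs V) t))) \<le> M"
    by (rule n0_le[OF h0]) (use M tt seg_props(2)[OF g, of t] t in auto)
  show "n1 h (fst (seg h (xs V) t)) \<le> 2 * M" unfolding n1_def using C D by simp
qed

lemma psub_seg:
  assumes "\<theta> \<in> {-h..0}"
  shows "fst (psub (seg h x s) (seg h y t)) \<theta> = fst x (s+\<theta>) - fst y (t+\<theta>)"
    "snd (psub (seg h x s) (seg h y t)) \<theta> = snd x (s+\<theta>) - snd y (t+\<theta>)"
  using assms by (auto simp: psub_def seg_def)

lemma cont_bound:
  fixes f :: "real \<Rightarrow> real"
  assumes "continuous_on {-h..T} f"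
  obtains M where "M \<ge> 0" "\<And>r. r \<in> {-h..T} \<Longrightarrow> \<bar>f r\<bar> \<le> M"
proof -
  have "compact (f ` {-h..T})" by (rule compact_continuous_image[OF assms]) simp
  then have "bounded (f ` {-h..T})" by (rule compact_imp_bounded)
  then obtain D0 where D0: "\<forall>x\<in>f ` {-h..T}. norm x \<le> D0" unfolding bounded_iff by blast
  show ?thesis
  proof (rule that[of "max D0 0"])
    fix r assume "r \<in> {-h..T}"
    then have "\<bar>f r\<bar> \<le> D0" using D0 by auto
    then show "\<bar>f r\<bar> \<le> max D0 0" by linarith
  qed auto
qed

lemma good_bounds:
  assumes g: "good V V'"
  obtains M where "M \<ge> 0" "\<And>r. r \<in> {-h..T} \<Longrightarrow> \<bar>Wf V r\<bar> \<le> M \<and> \<bar>Wd V r\<bar> \<le> M \<and> \<bar>V r\<bar> \<le> M \<and> \<bar>V' r\<bar> \<le> M"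
proof -
  have Wc: "continuous_on {-h..} (Wf V)"
    by (rule DERIV_continuous_on[of _ _ "Wd V"]) (use W_good(1)[OF g] in auto)
  have sub: "{-h..T} \<subseteq> {-h..}" by auto
  obtain M1 where M1: "\<And>r. r \<in> {-h..T} \<Longrightarrow> \<bar>Wf V r\<bar> \<le> M1" "M1 \<ge> 0"
    using cont_bound[OF continuous_on_subset[OF Wc sub]] by metis
  obtain M2 where M2: "\<And>r. r \<in> {-h..T} \<Longrightarrow> \<bar>Wd V r\<bar> \<le> M2" "M2 \<ge> 0"
    using cont_bound[OF continuous_on_subset[OF W_good(2)[OF g] sub]] by metis
  obtain M3 where M3: "\<And>r. r \<in> {-h..T} \<Longrightarrow> \<bar>V r\<bar> \<le> M3" "M3 \<ge> 0"
    using cont_bound[OF continuous_on_subset[OF good_cont[OF g] sub]] by metis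
  obtain M4 where M4: "\<And>r. r \<in> {-h..T} \<Longrightarrow> \<bar>V' r\<bar> \<le> M4" "M4 \<ge> 0"
    using cont_bound[OF continuous_on_subset[OF goodD(2)[OF g] sub]] by metis
  show ?thesis
  proof (rule that[of "M1 + M2 + M3 + M4"])
    fix r assume r: "r \<in> {-h..T}"
    show "\<bar>Wf V r\<bar> \<le> M1 + M2 + M3 + M4 \<and> \<bar>Wd V r\<bar> \<le> M1 + M2 + M3 + M4 \<and> \<bar>V r\<bar> \<le> M1 + M2 + M3 + M4 \<and> \<bar>V' r\<bar> \<le> M1 + M2 + M3 + M4"
      using M1(1)[OF r] M2(1)[OF r] M3(1)[OF r] M4(1)[OF r] M1(2) M2(2) M3(2) M4(2) by linarith
  qed (use M1 M2 M3 M4 in linarith)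
qed

lemma j_lip:
  obtains L where "L \<ge> 0" "\<And>\<phi> \<xi> E. \<phi> \<in> Uplus h \<Longrightarrow> \<xi> \<in> Uplus h \<Longrightarrow> n1p h \<phi> \<le> M \<Longrightarrow> n1p h \<xi> \<le> M \<Longrightarrow>
     (\<And>\<theta>. \<theta> \<in> {-h..0} \<Longrightarrow> \<bar>fst (psub \<phi> \<xi>) \<theta>\<bar> + \<bar>snd (psub \<phi> \<xi>) \<theta>\<bar> \<le> E) \<Longrightarrow>
     \<bar>j \<phi> - j \<xi>\<bar> \<le> L * E"
proof -
  have "sLb h (Uplus h) j" using H1 by (simp add: H1_def)
  then have S: "\<And>B. B \<subseteq> Uplus h \<Longrightarrow> (\<exists>M. \<forall>\<phi>\<in>B. n1p h \<phi> \<le> M) \<Longrightarrow>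
      (\<exists>L. \<forall>\<phi>\<in>B. \<forall>\<xi>\<in>B. \<bar>j \<phi> - j \<xi>\<bar> \<le> L * n0p h (psub \<phi> \<xi>))"
    unfolding sLb_def by blast
  have "\<exists>L. \<forall>\<phi>\<in>{\<phi>\<in>Uplus h. n1p h \<phi> \<le> M}. \<forall>\<xi>\<in>{\<phi>\<in>Uplus h. n1p h \<phi> \<le> M}.
      \<bar>j \<phi> - j \<xi>\<bar> \<le> L * n0p h (psub \<phi> \<xi>)"
    by (rule S) auto
  then obtain L where L: "\<forall>\<phi>\<in>{\<phi>\<in>Uplus h. n1p h \<phi> \<le> M}. \<forall>\<xi>\<in>{\<phi>\<in>Uplus h. n1p h \<phi> \<le> M}.
      \<bar>j \<phi> - j \<xi>\<bar> \<le> L * n0p h (psub \<phi> \<xi>)" by blast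
  show ?thesis
  proof (rule that[of "max L 0"])
    fix \<phi> \<xi> E assume p: "\<phi> \<in> Uplus h" "\<xi> \<in> Uplus h" "n1p h \<phi> \<le> M" "n1p h \<xi> \<le> M"
      and E: "\<And>\<theta>. \<theta> \<in> {-h..0} \<Longrightarrow> \<bar>fst (psub \<phi> \<xi>) \<theta>\<bar> + \<bar>snd (psub \<phi> \<xi>) \<theta>\<bar> \<le> E"
    have h0: "h \<ge> 0" using hpos by simp
    note N = n0p_between[OF h0 E]
    have "\<phi> \<in> {\<phi>\<in>Uplus h. n1p h \<phi> \<le> M}" "\<xi> \<in> {\<phi>\<in>Uplus h. n1p h \<phi> \<le> M}" using p by auto
    then have "\<bar>j \<phi> - j \<xi>\<bar> \<le> L * n0p h (psub \<phi> \<xi>)" using L by blast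
    also have "\<dots> \<le> max L 0 * n0p h (psub \<phi> \<xi>)" using N(1) by (intro mult_right_mono) auto
    also have "\<dots> \<le> max L 0 * E" using N(2) by (intro mult_left_mono) auto
    finally show "\<bar>j \<phi> - j \<xi>\<bar> \<le> max L 0 * E" .
  qed auto
qed

end

context cellphi begin

lemma gf_cont:
  assumes g: "good V V'"
  shows "continuous_on {0..} (gf V)"
proof (rule cont_on_ge0)
  fix T :: real assume T: "T > 0"
  obtain M where M0: "M \<ge> 0" and M: "\<And>r. r \<in> {-h..T} \<Longrightarrow> \<bar>Wf V r\<bar> \<le> M \<and> \<bar>Wd V r\<bar> \<le> M \<and> \<bar>V r\<bar> \<le> M \<and> \<bar>V' r\<bar> \<le> M"
    using good_bounds[OF g, of T] by metis
  obtain L where L0: "L \<ge> 0" and L: "\<And>\<phi> \<xi> E. \<phi> \<in> Uplus h \<Longrightarrow> \<xi> \<in> Uplus h \<Longrightarrow> n1p h \<phi> \<le> 4 * M \<Longrightarrow> n1p h \<xi> \<le> 4 * M \<Longrightarrow>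
     (\<And>\<theta>. \<theta> \<in> {-h..0} \<Longrightarrow> \<bar>fst (psub \<phi> \<xi>) \<theta>\<bar> + \<bar>snd (psub \<phi> \<xi>) \<theta>\<bar> \<le> E) \<Longrightarrow>
     \<bar>j \<phi> - j \<xi>\<bar> \<le> L * E"
    using j_lip[of "4 * M"] by metis
  have sub: "{-h..T} \<subseteq> {-h..}" by auto
  have Wc: "continuous_on {-h..T} (Wf V)"
    by (rule continuous_on_subset[OF DERIV_continuous_on[of _ _ "Wd V"] sub]) (use W_good(1)[OF g] in auto)
  have Vc: "continuous_on {-h..T} V" by (rule continuous_on_subset[OF good_cont[OF g] sub])
  have uW: "uniformly_continuous_on {-h..T} (Wf V)" by (rule compact_uniformly_continuous[OF Wc]) simp
  have uV: "uniformly_continuous_on {-h..T} V" by (rule compact_uniformly_continuous[OF Vc]) simp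
  show "continuous_on {0..T} (gf V)" unfolding continuous_on_iff
  proof (intro ballI allI impI)
    fix s0 e :: real assume s0: "s0 \<in> {0..T}" and e: "e > 0"
    define \<eta> where "\<eta> = e / (2 * (L + 1))"
    have \<eta>: "\<eta> > 0" using e L0 by (simp add: \<eta>_def)
    obtain d1 where d1: "d1 > 0" "\<And>x x'. x \<in> {-h..T} \<Longrightarrow> x' \<in> {-h..T} \<Longrightarrow> dist x' x < d1 \<Longrightarrow> dist (Wf V x') (Wf V x) < \<eta>"
      using uW \<eta> unfolding uniformly_continuous_on_def by metis
    obtain d2 where d2: "d2 > 0" "\<And>x x'. x \<in> {-h..T} \<Longrightarrow> x' \<in> {-h..T} \<Longrightarrow> dist x' x < d2 \<Longrightarrow> dist (V x') (V x) < \<eta>"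
      using uV \<eta> unfolding uniformly_continuous_on_def by metis
    show "\<exists>d>0. \<forall>s\<in>{0..T}. dist s s0 < d \<longrightarrow> dist (gf V s) (gf V s0) < e"
    proof (intro exI[of _ "min d1 d2"] conjI ballI impI)
      show "min d1 d2 > 0" using d1 d2 by simp
      fix s assume s: "s \<in> {0..T}" and ds: "dist s s0 < min d1 d2"
      have "\<bar>j (seg h (xs V) s) - j (seg h (xs V) s0)\<bar> \<le> L * (2 * \<eta>)"
      proof (rule L)
        show "seg h (xs V) s \<in> Uplus h" "seg h (xs V) s0 \<in> Uplus h"
          using seg_props(1)[OF g] s s0 by auto
        show "n1p h (seg h (xs V) s) \<le> 4 * M" "n1p h (seg h (xs V) s0) \<le> 4 * M"
          using seg_bounds(1)[OF g _ _ M] T s s0 by auto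
        fix \<theta> :: real assume th: "\<theta> \<in> {-h..0}"
        have in1: "s + \<theta> \<in> {-h..T}" "s0 + \<theta> \<in> {-h..T}" using th s s0 by auto
        have dd: "dist (s + \<theta>) (s0 + \<theta>) < d1" "dist (s + \<theta>) (s0 + \<theta>) < d2"
          using ds by (auto simp: dist_real_def)
        have "\<bar>Wf V (s+\<theta>) - Wf V (s0+\<theta>)\<bar> < \<eta>" using d1(2)[OF in1(2) in1(1) dd(1)] by (simp add: dist_real_def)
        moreover have "\<bar>V (s+\<theta>) - V (s0+\<theta>)\<bar> < \<eta>" using d2(2)[OF in1(2) in1(1) dd(2)] by (simp add: dist_real_def)
        ultimately show "\<bar>fst (psub (seg h (xs V) s) (seg h (xs V) s0)) \<theta>\<bar> + \<bar>snd (psub (seg h (xs V) s) (seg h (xs V) s0)) \<theta>\<bar> \<le> 2 * \<eta>"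
          using psub_seg[OF th] by (simp add: xs_def)
      qed
      also have "L * (2 * \<eta>) < e"
      proof -
        have "L * (2 * \<eta>) = e * (L / (L + 1))" using L0 by (simp add: \<eta>_def field_simps)
        also have "\<dots> < e * 1" using L0 e by (intro mult_strict_left_mono) auto
        finally show ?thesis by simp
      qed
      finally show "dist (gf V s) (gf V s0) < e" by (simp add: gf_def dist_real_def)
    qed
  qed
qed

lemma Tp0: "Tp V 0 = b 0" by (simp add: Tp_def)

lemma Tp_deriv:
  assumes g: "good V V'" and t: "t \<ge> 0"
  shows "(Tp V has_real_derivative gf V t - \<mu> * Tp V t) (at t within {0..})"
proof -
  have c: "continuous_on {0..} (\<lambda>s. exp (\<mu> * s) * gf V s)"
    by (intro continuous_intros gf_cont[OF g])
  have I: "((\<lambda>t. integral {0..t} (\<lambda>s. exp (\<mu> * s) * gf V s)) has_real_derivative exp (\<mu> * t) * gf V t) (at t within {0..})"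
    by (rule FTC0[OF c t])
  have E: "((\<lambda>t. exp (- \<mu> * t)) has_real_derivative exp (- \<mu> * t) * (- \<mu>)) (at t within {0..})"
    by (auto intro!: derivative_eq_intros)
  have D: "((\<lambda>t. exp (- \<mu> * t) * (b 0 + integral {0..t} (\<lambda>s. exp (\<mu> * s) * gf V s))) has_real_derivative
     exp (- \<mu> * t) * (- \<mu>) * (b 0 + integral {0..t} (\<lambda>s. exp (\<mu> * s) * gf V s)) + (0 + exp (\<mu> * t) * gf V t) * exp (- \<mu> * t))
     (at t within {0..})"
    by (rule DERIV_mult[OF E DERIV_add[OF DERIV_const I]])
  have eq: "exp (- \<mu> * t) * (- \<mu>) * (b 0 + integral {0..t} (\<lambda>s. exp (\<mu> * s) * gf V s)) + (0 + exp (\<mu> * t) * gf V t) * exp (- \<mu> * t)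
      = gf V t - \<mu> * Tp V t"
  proof -
    have "exp (\<mu> * t) * exp (- \<mu> * t) = 1" by (simp add: exp_add[symmetric])
    then show ?thesis unfolding Tp_def by (simp add: algebra_simps)
  qed
  have F: "Tp V = (\<lambda>t. exp (- \<mu> * t) * (b 0 + integral {0..t} (\<lambda>s. exp (\<mu> * s) * gf V s)))"
    by (rule ext) (simp add: Tp_def)
  show ?thesis using D unfolding eq F[symmetric] .
qed

lemma Tp_nn:
  assumes g: "good V V'" and t: "t \<ge> 0"
  shows "Tp V t \<ge> 0"
proof -
  have c: "continuous_on {0..t} (\<lambda>s. exp (\<mu> * s) * gf V s)"
    by (intro continuous_intros continuous_on_subset[OF gf_cont[OF g]]) auto
  have "0 \<le> integral {0..t} (\<lambda>s. exp (\<mu> * s) * gf V s)"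
    by (rule integral_nonneg[OF integrable_continuous_real[OF c]]) (use gf_nn[OF g] in auto)
  then show ?thesis unfolding Tp_def using b_nn'[of 0] by simp
qed

lemma T_good:
  assumes g: "good V V'"
  shows "good (Tf V) (Td V)"
proof -
  have Tpc: "continuous_on {0..} (Tp V)"
    by (rule DERIV_continuous_on[of _ _ "\<lambda>t. gf V t - \<mu> * Tp V t"]) (use Tp_deriv[OF g] in auto)
  have gc: "continuous_on {0..} (\<lambda>t. gf V t - \<mu> * Tp V t)"
    by (intro continuous_intros gf_cont[OF g] Tpc)
  have e1: "dr h b 0 = gf V 0 - \<mu> * Tp V 0" using b_comp gf0[OF g] by (simp add: Tp0)
  note G = glue[of h b "dr h b" "Tp V" "\<lambda>t. gf V t - \<mu> * Tp V t", OF _ C1fun_dr(2)[OF hpos bC1] C1fun_dr(1)[OF hpos bC1]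
      Tp_deriv[OF g] gc _ e1]
  have d: "\<And>t. t \<ge> -h \<Longrightarrow> (Tf V has_real_derivative Td V t) (at t within {-h..})"
    using G(1) hpos unfolding Tf_def[abs_def] Td_def[abs_def] by (simp add: Tp0)
  have c: "continuous_on {-h..} (Td V)"
    using G(2) hpos unfolding Tf_def[abs_def] Td_def[abs_def] by (simp add: Tp0)
  have n: "\<And>t. t \<ge> 0 \<Longrightarrow> Tf V t \<ge> 0" using Tp_nn[OF g] b_nn' by (simp add: Tf_def)
  show ?thesis unfolding good_def using d c n by (simp add: Tf_def)
qed

end

lemma exp_diff_le:
  fixes x y :: real
  shows "\<bar>exp x - exp y\<bar> \<le> exp (max x y) * \<bar>x - y\<bar>"
proof -
  have *: "exp v - exp u \<le> exp v * (v - u)" if "u \<le> v" for u v :: real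
  proof -
    have "1 + (u - v) \<le> exp (u - v)" by (rule exp_ge_add_one_self)
    then have "1 - (v - u) \<le> exp (u - v)" by linarith
    then have "exp v * (1 - (v - u)) \<le> exp v * exp (u - v)" by (rule mult_left_mono) simp
    also have "\<dots> = exp u" by (simp add: exp_add[symmetric])
    finally show ?thesis by (simp add: algebra_simps)
  qed
  show ?thesis
  proof (cases "x \<le> y")
    case True
    then have "exp x \<le> exp y" by simp
    then show ?thesis using *[OF True] True by (simp add: max_def abs_minus_commute)
  next
    case False
    then have "exp y \<le> exp x" by simp
    then show ?thesis using *[of y x] False by (simp add: max_def)
  qed
qed

lemma int_exp_bound:
  fixes l r c :: real
  assumes l: "l \<ge> 1" and r: "r \<ge> 0" and c: "c \<ge> 0"
  shows "((\<lambda>s. c * exp (l * s)) has_integral (c * exp (l * r) / l - c / l)) {0..r}"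
    "integral {0..r} (\<lambda>s. c * exp (l * s)) \<le> c * exp (l * r) / l"
proof -
  have "((\<lambda>s. c * exp (l * s)) has_integral ((\<lambda>s. c * exp (l * s) / l) r - (\<lambda>s. c * exp (l * s) / l) 0)) {0..r}"
  proof (rule fundamental_theorem_of_calculus[OF r])
    fix x assume "x \<in> {0..r}"
    have "((\<lambda>s. c * exp (l * s) / l) has_real_derivative c * (exp (l * x) * l) / l) (at x within {0..r})"
      by (auto intro!: derivative_eq_intros)
    then show "((\<lambda>s. c * exp (l * s) / l) has_vector_derivative c * exp (l * x)) (at x within {0..r})"
      using l by (simp add: has_real_derivative_iff_has_vector_derivative)
  qed
  then show I: "((\<lambda>s. c * exp (l * s)) has_integral (c * exp (l * r) / l - c / l)) {0..r}" by simp
  have "c / l \<ge> 0" using c l by simp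
  then show "integral {0..r} (\<lambda>s. c * exp (l * s)) \<le> c * exp (l * r) / l"
    using integral_unique[OF I] by simp
qed

context cellphi begin

lemma seg_n1:
  assumes g: "good V V'" and t: "t \<in> {0..T}"
    and M: "\<And>r. r \<in> {-h..T} \<Longrightarrow> \<bar>Wf V r\<bar> \<le> M \<and> \<bar>Wd V r\<bar> \<le> M"
  shows "n1 h (fst (seg h (xs V) t)) \<le> 2 * M"
proof -
  have tt: "t + \<theta> \<in> {-h..T}" if "\<theta> \<in> {-h..0}" for \<theta> using that t by auto
  have h0: "h \<ge> 0" using hpos by simp
  have C: "n0 h (fst (seg h (xs V) t)) \<le> M"
    by (rule n0_le[OF h0]) (use M tt in \<open>auto simp: seg_fst\<close>)
  have D: "n0 h (dr h (fst (seg h (xs V) t))) \<le> M"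
    by (rule n0_le[OF h0]) (use M tt seg_props(2)[OF g, of t] t in auto)
  show ?thesis unfolding n1_def using C D by simp
qed

lemma I_bound:
  assumes g: "good V V'" and Q: "\<And>x. x > Rm \<Longrightarrow> \<bar>q x\<bar> \<le> Q" and r: "r \<ge> 0"
  shows "integral {0..r} (\<lambda>s. q (V s)) \<le> Q * r" "(\<lambda>s. q (V s)) integrable_on {0..r}"
proof -
  have c: "continuous_on {0..r} (\<lambda>s. q (V s))" by (rule continuous_on_subset[OF qV_cont[OF g]]) auto
  show i: "(\<lambda>s. q (V s)) integrable_on {0..r}" by (rule integrable_continuous_real[OF c])
  have "integral {0..r} (\<lambda>s. q (V s)) \<le> integral {0..r} (\<lambda>s. Q)"
  proof (rule integral_le[OF i])
    show "(\<lambda>s. Q) integrable_on {0..r}" by (rule integrable_continuous_real) (rule continuous_on_const)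
    fix s assume "s \<in> {0..r}"
    have "V s > Rm" using good_nn[OF g, of s] Rmneg by linarith
    then show "q (V s) \<le> Q" using Q[of "V s"] by simp
  qed
  also have "\<dots> = Q * r" using r by simp
  finally show "integral {0..r} (\<lambda>s. q (V s)) \<le> Q * r" .
qed

lemma W_bound:
  assumes g: "good V V'" and Q0: "Q \<ge> 0" and Q: "\<And>x. x > Rm \<Longrightarrow> \<bar>q x\<bar> \<le> Q"
    and Ma: "\<And>\<theta>. \<theta> \<in> {-h..0} \<Longrightarrow> \<bar>a \<theta>\<bar> \<le> Ma \<and> \<bar>dr h a \<theta>\<bar> \<le> Ma" and Ma0: "Ma \<ge> 0"
    and r: "r \<in> {-h..T}"
  shows "\<bar>Wf V r\<bar> \<le> Ma + a 0 * exp (Q * T) * (1 + Q) \<and> \<bar>Wd V r\<bar> \<le> Ma + a 0 * exp (Q * T) * (1 + Q)"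
proof (cases "r \<le> 0")
  case True
  then have "r \<in> {-h..0}" using r by auto
  then have "\<bar>a r\<bar> \<le> Ma \<and> \<bar>dr h a r\<bar> \<le> Ma" by (rule Ma)
  moreover have "a 0 * exp (Q * T) * (1 + Q) \<ge> 0" using a_nn'[of 0] Q0 by simp
  ultimately show ?thesis using True by (simp add: Wf_def Wd_def)
next
  case False
  then have r0: "r \<ge> 0" "r \<le> T" using r by auto
  have "integral {0..r} (\<lambda>s. q (V s)) \<le> Q * T"
    using I_bound(1)[OF g Q r0(1)] mult_left_mono[OF r0(2) Q0] by linarith
  then have e: "exp (integral {0..r} (\<lambda>s. q (V s))) \<le> exp (Q * T)" by simp
  have a0: "a 0 \<ge> 0" by (rule a_nn')
  have W: "0 \<le> Wp V r" "Wp V r \<le> a 0 * exp (Q * T)"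
    unfolding Wp_def using a0 e by (auto intro: mult_left_mono)
  have qV: "\<bar>q (V r)\<bar> \<le> Q" using Q good_nn[OF g, of r] Rmneg by force
  have "\<bar>q (V r) * Wp V r\<bar> \<le> Q * (a 0 * exp (Q * T))"
    unfolding abs_mult using qV W by (intro mult_mono) auto
  moreover have "a 0 * exp (Q * T) * (1 + Q) = a 0 * exp (Q * T) + Q * (a 0 * exp (Q * T))" by (simp add: algebra_simps)
  moreover have "Q * (a 0 * exp (Q * T)) \<ge> 0" using Q0 a0 by simp
  ultimately show ?thesis using False W Ma0 by (simp add: Wf_def Wd_def)
qed

lemma gf_bound:
  obtains J where "J \<ge> 0" "\<And>V V' s. good V V' \<Longrightarrow> (\<And>r. r \<in> {-h..T} \<Longrightarrow> \<bar>Wf V r\<bar> \<le> M \<and> \<bar>Wd V r\<bar> \<le> M) \<Longrightarrow>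
      s \<in> {0..T} \<Longrightarrow> \<bar>gf V s\<bar> \<le> J"
proof -
  define B1 where "B1 = {f. C1fun h f \<and> (\<forall>\<theta>\<in>{-h..0}. f \<theta> \<ge> 0) \<and> n1 h f \<le> 2 * M}"
  define B2 where "B2 = {g. C1fun h g \<and> (\<forall>\<theta>\<in>{-h..0}. g \<theta> \<ge> 0)}"
  have sub: "B1 \<times> B2 \<subseteq> Uplus h" by (auto simp: B1_def B2_def Uplus_def C1p_def)
  have bd: "\<exists>M'. \<forall>f\<in>B1. n1 h f \<le> M'" by (auto simp: B1_def)
  have "\<forall>B1 B2. B1 \<times> B2 \<subseteq> Uplus h \<longrightarrow> (\<exists>M. \<forall>f\<in>B1. n1 h f \<le> M) \<longrightarrow> (\<exists>M. \<forall>\<phi>\<in>B1 \<times> B2. \<bar>j \<phi>\<bar> \<le> M)"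
    using H1 by (simp add: H1_def)
  then obtain J where J: "\<forall>\<phi>\<in>B1 \<times> B2. \<bar>j \<phi>\<bar> \<le> J" using sub bd by blast
  show ?thesis
  proof (rule that[of "max J 0"])
    fix V V' s assume g: "good V V'" and M: "\<And>r. r \<in> {-h..T} \<Longrightarrow> \<bar>Wf V r\<bar> \<le> M \<and> \<bar>Wd V r\<bar> \<le> M"
      and s: "s \<in> {0..T}"
    have U: "seg h (xs V) s \<in> Uplus h" using seg_props(1)[OF g] s by auto
    have "fst (seg h (xs V) s) \<in> B1"
      using U seg_n1[OF g s M] by (auto simp: B1_def Uplus_def C1p_def)
    moreover have "snd (seg h (xs V) s) \<in> B2"
      using U by (auto simp: B2_def Uplus_def C1p_def)
    ultimately have "seg h (xs V) s \<in> B1 \<times> B2" by (simp add: mem_Times_iff)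
    then have "\<bar>j (seg h (xs V) s)\<bar> \<le> J" by (rule bspec[OF J])
    then have "\<bar>gf V s\<bar> \<le> J" by (simp add: gf_def)
    then show "\<bar>gf V s\<bar> \<le> max J 0" by linarith
  qed auto
qed

lemma Tf_bound:
  assumes g: "good V V'" and T0: "T \<ge> 0" and J0: "J \<ge> 0" and J: "\<And>s. s \<in> {0..T} \<Longrightarrow> \<bar>gf V s\<bar> \<le> J"
    and Mb: "\<And>\<theta>. \<theta> \<in> {-h..0} \<Longrightarrow> \<bar>b \<theta>\<bar> \<le> Ma \<and> \<bar>dr h b \<theta>\<bar> \<le> Ma" and Ma0: "Ma \<ge> 0"
    and r: "r \<in> {-h..T}"
  shows "\<bar>Tf V r\<bar> \<le> Ma + b 0 + J * T" "\<bar>Td V r\<bar> \<le> Ma + J + \<mu> * (Ma + b 0 + J * T)"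
proof -
  have b0: "b 0 \<ge> 0" by (rule b_nn')
  have JT: "J * T \<ge> 0" using J0 T0 by simp
  have main: "\<bar>Tf V r\<bar> \<le> Ma + b 0 + J * T"
  proof (cases "r \<le> 0")
    case True
    then have "r \<in> {-h..0}" using r by auto
    then show ?thesis using Mb[of r] True b0 JT by (simp add: Tf_def)
  next
    case False
    then have r0: "r \<ge> 0" "r \<le> T" using r by auto
    have c: "continuous_on {0..r} (\<lambda>s. exp (\<mu> * s) * gf V s)"
      by (intro continuous_intros continuous_on_subset[OF gf_cont[OF g]]) auto
    have "integral {0..r} (\<lambda>s. exp (\<mu> * s) * gf V s) \<le> integral {0..r} (\<lambda>s. exp (\<mu> * r) * J)"
    proof (rule integral_le[OF integrable_continuous_real[OF c]])
      show "(\<lambda>s. exp (\<mu> * r) * J) integrable_on {0..r}" by (rule integrable_continuous_real) (rule continuous_on_const)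
      fix s assume s: "s \<in> {0..r}"
      have "exp (\<mu> * s) \<le> exp (\<mu> * r)" using s mupos by (auto intro: mult_left_mono)
      moreover have "gf V s \<le> J" using J[of s] s r0 by auto
      moreover have "gf V s \<ge> 0" using gf_nn[OF g, of s] s by auto
      ultimately show "exp (\<mu> * s) * gf V s \<le> exp (\<mu> * r) * J" by (intro mult_mono) auto
    qed
    also have "\<dots> = exp (\<mu> * r) * J * r" using r0 by simp
    finally have I: "integral {0..r} (\<lambda>s. exp (\<mu> * s) * gf V s) \<le> exp (\<mu> * r) * J * r" .
    have "Tp V r \<le> exp (- \<mu> * r) * (b 0 + exp (\<mu> * r) * J * r)"
      unfolding Tp_def by (intro mult_left_mono) (use I in auto)
    also have "\<dots> = exp (- \<mu> * r) * b 0 + J * r"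
      by (simp add: algebra_simps exp_add[symmetric])
    also have "\<dots> \<le> b 0 + J * T"
    proof -
      have "exp (- \<mu> * r) \<le> 1" using mupos r0 by simp
      then have "exp (- \<mu> * r) * b 0 \<le> b 0" using b0 by (simp add: mult_left_le_one_le)
      moreover have "J * r \<le> J * T" using J0 r0 by (intro mult_left_mono) auto
      ultimately show ?thesis by linarith
    qed
    finally have "Tp V r \<le> b 0 + J * T" .
    moreover have "Tp V r \<ge> 0" by (rule Tp_nn[OF g r0(1)])
    ultimately show ?thesis using False Ma0 by (simp add: Tf_def)
  qed
  show "\<bar>Tf V r\<bar> \<le> Ma + b 0 + J * T" by (rule main)
  show "\<bar>Td V r\<bar> \<le> Ma + J + \<mu> * (Ma + b 0 + J * T)"
  proof (cases "r \<le> 0")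
    case True
    then have "r \<in> {-h..0}" using r by auto
    then have "\<bar>dr h b r\<bar> \<le> Ma" using Mb by blast
    moreover have "\<mu> * (Ma + b 0 + J * T) \<ge> 0" using mupos Ma0 b0 JT by simp
    ultimately show ?thesis using True J0 by (simp add: Td_def)
  next
    case False
    then have r0: "r \<in> {0..T}" using r by auto
    have "\<bar>Tp V r\<bar> \<le> Ma + b 0 + J * T" using main False by (simp add: Tf_def)
    then have "\<bar>\<mu> * Tp V r\<bar> \<le> \<mu> * (Ma + b 0 + J * T)" unfolding abs_mult using mupos by (intro mult_mono) auto
    moreover have "\<bar>gf V r\<bar> \<le> J" by (rule J[OF r0])
    ultimately show ?thesis using False Ma0 by (simp add: Td_def)
  qed
qed

end

context cellphi begin

lemma W_diff:
  assumes gU: "good U U'" and gV: "good V V'" and Q0: "Q \<ge> 0" and Q: "\<And>x. x > Rm \<Longrightarrow> \<bar>q x\<bar> \<le> Q"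
    and Lq0: "Lq \<ge> 0" and Lq: "\<And>x y. x \<in> {0..MV} \<Longrightarrow> y \<in> {0..MV} \<Longrightarrow> \<bar>q x - q y\<bar> \<le> Lq * \<bar>x - y\<bar>"
    and UB: "\<And>r. r \<in> {0..T} \<Longrightarrow> U r \<le> MV" and VB: "\<And>r. r \<in> {0..T} \<Longrightarrow> V r \<le> MV"
    and l: "lam \<ge> 1" and K: "\<And>r. r \<in> {0..T} \<Longrightarrow> \<bar>U r - V r\<bar> \<le> K * exp (lam * r)"
    and K0: "K \<ge> 0" and r: "r \<in> {0..T}"
  shows "\<bar>Wf U r - Wf V r\<bar> \<le> a 0 * exp (Q * T) * Lq * K * exp (lam * r)"
proof (cases "r = 0")
  case True
  have "a 0 * exp (Q * T) * Lq * K * exp (lam * r) \<ge> 0" using a_nn'[of 0] Lq0 K0 by simp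
  then show ?thesis using True by (simp add: Wf_def)
next
  case False
  then have r0: "r > 0" "r \<le> T" using r by auto
  define IU where "IU = integral {0..r} (\<lambda>s. q (U s))"
  define IV where "IV = integral {0..r} (\<lambda>s. q (V s))"
  have iU: "(\<lambda>s. q (U s)) integrable_on {0..r}" using I_bound(2)[OF gU Q] r0 by simp
  have iV: "(\<lambda>s. q (V s)) integrable_on {0..r}" using I_bound(2)[OF gV Q] r0 by simp
  have "IU \<le> Q * r" unfolding IU_def using I_bound(1)[OF gU Q] r0 by simp
  moreover have "IV \<le> Q * r" unfolding IV_def using I_bound(1)[OF gV Q] r0 by simp
  moreover have "Q * r \<le> Q * T" using Q0 r0 by (intro mult_left_mono) auto
  ultimately have mx: "exp (max IU IV) \<le> exp (Q * T)" by simp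
  have d: "IU - IV = integral {0..r} (\<lambda>s. q (U s) - q (V s))"
    unfolding IU_def IV_def by (rule integral_diff[OF iU iV, symmetric])
  have ie: "((\<lambda>s. Lq * K * exp (lam * s)) has_integral (Lq * K * exp (lam * r) / lam - Lq * K / lam)) {0..r}"
    by (rule int_exp_bound(1)) (use l r0 Lq0 K0 in auto)
  have "\<bar>IU - IV\<bar> \<le> integral {0..r} (\<lambda>s. Lq * K * exp (lam * s))"
    unfolding d real_norm_def[symmetric]
  proof (rule Henstock_Kurzweil_Integration.integral_norm_bound_integral)
    show "(\<lambda>s. q (U s) - q (V s)) integrable_on {0..r}" by (rule integrable_diff[OF iU iV])
    show "(\<lambda>s. Lq * K * exp (lam * s)) integrable_on {0..r}" using ie by blast
    fix s assume s: "s \<in> {0..r}"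
    then have sT: "s \<in> {0..T}" using r0 by auto
    have "\<bar>q (U s) - q (V s)\<bar> \<le> Lq * \<bar>U s - V s\<bar>"
      by (rule Lq) (use good_nn[OF gU, of s] good_nn[OF gV, of s] UB[OF sT] VB[OF sT] in auto)
    also have "\<dots> \<le> Lq * (K * exp (lam * s))" by (rule mult_left_mono[OF K[OF sT] Lq0])
    finally show "norm (q (U s) - q (V s)) \<le> Lq * K * exp (lam * s)" by (simp add: mult.assoc)
  qed
  also have "\<dots> \<le> Lq * K * exp (lam * r) / lam" by (rule int_exp_bound(2)) (use l r0 Lq0 K0 in auto)
  also have "\<dots> \<le> Lq * K * exp (lam * r)"
  proof -
    have "Lq * K * exp (lam * r) \<ge> 0" using Lq0 K0 by simp
    then show ?thesis using divide_left_mono[of 1 lam "Lq * K * exp (lam * r)"] l by simp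
  qed
  finally have dI: "\<bar>IU - IV\<bar> \<le> Lq * K * exp (lam * r)" .
  have "\<bar>Wf U r - Wf V r\<bar> = a 0 * \<bar>exp IU - exp IV\<bar>"
    using r0 a_nn'[of 0] by (simp add: Wf_def Wp_def IU_def IV_def abs_mult flip: right_diff_distrib)
  also have "\<dots> \<le> a 0 * (exp (max IU IV) * \<bar>IU - IV\<bar>)"
    by (rule mult_left_mono[OF exp_diff_le a_nn'])
  also have "\<dots> \<le> a 0 * (exp (Q * T) * (Lq * K * exp (lam * r)))"
    by (intro mult_left_mono mult_mono mx dI a_nn') auto
  finally show ?thesis by (simp add: mult.assoc)
qed

end

context cellphi begin

lemma g_diff:
  assumes gU: "good U U'" and gV: "good V V'" and L0: "L \<ge> 0"
    and Lip: "\<And>\<phi> \<xi> E. \<phi> \<in> Uplus h \<Longrightarrow> \<xi> \<in> Uplus h \<Longrightarrow> n1p h \<phi> \<le> 4 * M \<Longrightarrow> n1p h \<xi> \<le> 4 * M \<Longrightarrow>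
     (\<And>\<theta>. \<theta> \<in> {-h..0} \<Longrightarrow> \<bar>fst (psub \<phi> \<xi>) \<theta>\<bar> + \<bar>snd (psub \<phi> \<xi>) \<theta>\<bar> \<le> E) \<Longrightarrow>
     \<bar>j \<phi> - j \<xi>\<bar> \<le> L * E"
    and MU: "\<And>r. r \<in> {-h..T} \<Longrightarrow> \<bar>Wf U r\<bar> \<le> M \<and> \<bar>Wd U r\<bar> \<le> M \<and> \<bar>U r\<bar> \<le> M \<and> \<bar>U' r\<bar> \<le> M"
    and MV: "\<And>r. r \<in> {-h..T} \<Longrightarrow> \<bar>Wf V r\<bar> \<le> M \<and> \<bar>Wd V r\<bar> \<le> M \<and> \<bar>V r\<bar> \<le> M \<and> \<bar>V' r\<bar> \<le> M"
    and WD: "\<And>r. r \<in> {0..T} \<Longrightarrow> \<bar>Wf U r - Wf V r\<bar> \<le> C1 * K * exp (lam * r)"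
    and K: "\<And>r. r \<in> {0..T} \<Longrightarrow> \<bar>U r - V r\<bar> \<le> K * exp (lam * r)"
    and C10: "C1 \<ge> 0" and K0: "K \<ge> 0" and l: "lam \<ge> 0" and s: "s \<in> {0..T}"
  shows "\<bar>gf U s - gf V s\<bar> \<le> L * ((C1 + 1) * K * exp (lam * s))"
  unfolding gf_def
proof (rule Lip)
  have T0: "T \<ge> 0" using s by auto
  show "seg h (xs U) s \<in> Uplus h" "seg h (xs V) s \<in> Uplus h" using seg_props(1) gU gV s by auto
  show "n1p h (seg h (xs U) s) \<le> 4 * M" by (rule seg_bounds(1)[OF gU T0 s MU])
  show "n1p h (seg h (xs V) s) \<le> 4 * M" by (rule seg_bounds(1)[OF gV T0 s MV])
  fix \<theta> :: real assume th: "\<theta> \<in> {-h..0}"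
  have E0: "(C1 + 1) * K * exp (lam * s) \<ge> 0" using C10 K0 by simp
  have eq: "\<bar>fst (psub (seg h (xs U) s) (seg h (xs V) s)) \<theta>\<bar> + \<bar>snd (psub (seg h (xs U) s) (seg h (xs V) s)) \<theta>\<bar>
      = \<bar>Wf U (s+\<theta>) - Wf V (s+\<theta>)\<bar> + \<bar>U (s+\<theta>) - V (s+\<theta>)\<bar>"
    using psub_seg[OF th] by (simp add: xs_def)
  show "\<bar>fst (psub (seg h (xs U) s) (seg h (xs V) s)) \<theta>\<bar> + \<bar>snd (psub (seg h (xs U) s) (seg h (xs V) s)) \<theta>\<bar>
      \<le> (C1 + 1) * K * exp (lam * s)"
    unfolding eq
  proof (cases "s + \<theta> \<le> 0")
    case True
    then have "Wf U (s+\<theta>) = Wf V (s+\<theta>)" "U (s+\<theta>) = V (s+\<theta>)"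
      using goodD(1)[OF gU] goodD(1)[OF gV] by (auto simp: Wf_def)
    then show "\<bar>Wf U (s+\<theta>) - Wf V (s+\<theta>)\<bar> + \<bar>U (s+\<theta>) - V (s+\<theta>)\<bar> \<le> (C1 + 1) * K * exp (lam * s)"
      using E0 by simp
  next
    case False
    then have r: "s + \<theta> \<in> {0..T}" using th s by auto
    have ee: "exp (lam * (s + \<theta>)) \<le> exp (lam * s)" using th l by (auto intro: mult_left_mono)
    have "\<bar>Wf U (s+\<theta>) - Wf V (s+\<theta>)\<bar> + \<bar>U (s+\<theta>) - V (s+\<theta>)\<bar> \<le> C1 * K * exp (lam * (s+\<theta>)) + K * exp (lam * (s+\<theta>))"
      using WD[OF r] K[OF r] by linarith
    also have "\<dots> = (C1 + 1) * K * exp (lam * (s+\<theta>))" by (simp add: algebra_simps)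
    also have "\<dots> \<le> (C1 + 1) * K * exp (lam * s)" using ee C10 K0 by (intro mult_left_mono) auto
    finally show "\<bar>Wf U (s+\<theta>) - Wf V (s+\<theta>)\<bar> + \<bar>U (s+\<theta>) - V (s+\<theta>)\<bar> \<le> (C1 + 1) * K * exp (lam * s)" .
  qed
qed

lemma T_diff:
  assumes gU: "good U U'" and gV: "good V V'" and C0: "C \<ge> 0"
    and G: "\<And>s. s \<in> {0..T} \<Longrightarrow> \<bar>gf U s - gf V s\<bar> \<le> C * K * exp (lam * s)"
    and l: "lam \<ge> 1" and lC: "2 * C \<le> lam" and K0: "K \<ge> 0" and t: "t \<in> {0..T}"
  shows "\<bar>Tf U t - Tf V t\<bar> \<le> K / 2 * exp (lam * t)"
proof (cases "t = 0")
  case True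
  then show ?thesis using K0 by (simp add: Tf_def)
next
  case False
  then have t0: "t > 0" "t \<le> T" using t by auto
  have cU: "continuous_on {0..t} (\<lambda>s. exp (\<mu> * s) * gf U s)"
    by (intro continuous_intros continuous_on_subset[OF gf_cont[OF gU]]) auto
  have cV: "continuous_on {0..t} (\<lambda>s. exp (\<mu> * s) * gf V s)"
    by (intro continuous_intros continuous_on_subset[OF gf_cont[OF gV]]) auto
  note iU = integrable_continuous_real[OF cU] and iV = integrable_continuous_real[OF cV]
  define c where "c = exp (\<mu> * t) * C * K"
  have c0: "c \<ge> 0" using C0 K0 by (simp add: c_def)
  have ie: "((\<lambda>s. c * exp (lam * s)) has_integral (c * exp (lam * t) / lam - c / lam)) {0..t}"
    by (rule int_exp_bound(1)) (use l t0 c0 in auto)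
  have d: "integral {0..t} (\<lambda>s. exp (\<mu> * s) * gf U s) - integral {0..t} (\<lambda>s. exp (\<mu> * s) * gf V s)
      = integral {0..t} (\<lambda>s. exp (\<mu> * s) * gf U s - exp (\<mu> * s) * gf V s)"
    by (rule integral_diff[OF iU iV, symmetric])
  have "\<bar>integral {0..t} (\<lambda>s. exp (\<mu> * s) * gf U s - exp (\<mu> * s) * gf V s)\<bar> \<le> integral {0..t} (\<lambda>s. c * exp (lam * s))"
    unfolding real_norm_def[symmetric]
  proof (rule Henstock_Kurzweil_Integration.integral_norm_bound_integral)
    show "(\<lambda>s. exp (\<mu> * s) * gf U s - exp (\<mu> * s) * gf V s) integrable_on {0..t}" by (rule integrable_diff[OF iU iV])
    show "(\<lambda>s. c * exp (lam * s)) integrable_on {0..t}" using ie by blast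
    fix s assume s: "s \<in> {0..t}"
    then have sT: "s \<in> {0..T}" using t0 by auto
    have e1: "exp (\<mu> * s) \<le> exp (\<mu> * t)" using s mupos by (auto intro: mult_left_mono)
    have "\<bar>exp (\<mu> * s) * gf U s - exp (\<mu> * s) * gf V s\<bar> = exp (\<mu> * s) * \<bar>gf U s - gf V s\<bar>"
      by (simp add: abs_mult flip: right_diff_distrib)
    also have "\<dots> \<le> exp (\<mu> * t) * (C * K * exp (lam * s))"
      by (rule mult_mono[OF e1 G[OF sT]]) auto
    also have "\<dots> = c * exp (lam * s)" by (simp add: c_def)
    finally show "norm (exp (\<mu> * s) * gf U s - exp (\<mu> * s) * gf V s) \<le> c * exp (lam * s)" by simp
  qed
  also have "\<dots> \<le> c * exp (lam * t) / lam" by (rule int_exp_bound(2)) (use l t0 c0 in auto)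
  finally have I: "\<bar>integral {0..t} (\<lambda>s. exp (\<mu> * s) * gf U s) - integral {0..t} (\<lambda>s. exp (\<mu> * s) * gf V s)\<bar>
      \<le> c * exp (lam * t) / lam" unfolding d .
  have "\<bar>Tf U t - Tf V t\<bar> = exp (- \<mu> * t) * \<bar>integral {0..t} (\<lambda>s. exp (\<mu> * s) * gf U s) - integral {0..t} (\<lambda>s. exp (\<mu> * s) * gf V s)\<bar>"
    using t0 by (simp add: Tf_def Tp_def abs_mult flip: right_diff_distrib)
  also have "\<dots> \<le> exp (- \<mu> * t) * (c * exp (lam * t) / lam)" by (rule mult_left_mono[OF I]) simp
  also have "\<dots> = C * K * exp (lam * t) / lam"
    by (simp add: c_def mult.assoc[symmetric] flip: exp_add)
  also have "\<dots> \<le> K / 2 * exp (lam * t)"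
  proof -
    have "C * K * exp (lam * t) / lam = (C / lam) * (K * exp (lam * t))" by simp
    moreover have "C / lam \<le> 1 / 2" using lC l by (simp add: divide_le_eq)
    moreover have "K * exp (lam * t) \<ge> 0" using K0 by simp
    ultimately have "C * K * exp (lam * t) / lam \<le> (1/2) * (K * exp (lam * t))"
      by (metis mult_right_mono)
    then show ?thesis by simp
  qed
  finally show ?thesis .
qed

end

context cellphi begin

definition PB :: "real \<Rightarrow> real \<Rightarrow> real \<Rightarrow> bool" where
  "PB T MV MD \<longleftrightarrow> (\<forall>V V' r. good V V' \<longrightarrow> r \<in> {-h..T} \<longrightarrow> \<bar>Tf V r\<bar> \<le> MV \<and> \<bar>Td V r\<bar> \<le> MD)"
definition PG :: "real \<Rightarrow> real \<Rightarrow> real \<Rightarrow> real \<Rightarrow> real \<Rightarrow> bool" where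
  "PG T MV MD C lam \<longleftrightarrow> (\<forall>U U' V V' K s. good U U' \<longrightarrow> good V V' \<longrightarrow> (\<forall>r\<in>{-h..T}. \<bar>U r\<bar> \<le> MV \<and> \<bar>U' r\<bar> \<le> MD) \<longrightarrow>
       (\<forall>r\<in>{-h..T}. \<bar>V r\<bar> \<le> MV \<and> \<bar>V' r\<bar> \<le> MD) \<longrightarrow>
       (\<forall>r\<in>{0..T}. \<bar>U r - V r\<bar> \<le> K * exp (lam * r)) \<longrightarrow> s \<in> {0..T} \<longrightarrow>
       \<bar>gf U s - gf V s\<bar> \<le> C * K * exp (lam * s))"
definition PT :: "real \<Rightarrow> real \<Rightarrow> real \<Rightarrow> real \<Rightarrow> bool" where
  "PT T MV MD lam \<longleftrightarrow> (\<forall>U U' V V' K t. good U U' \<longrightarrow> good V V' \<longrightarrow> (\<forall>r\<in>{-h..T}. \<bar>U r\<bar> \<le> MV \<and> \<bar>U' r\<bar> \<le> MD) \<longrightarrow>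
       (\<forall>r\<in>{-h..T}. \<bar>V r\<bar> \<le> MV \<and> \<bar>V' r\<bar> \<le> MD) \<longrightarrow>
       (\<forall>r\<in>{0..T}. \<bar>U r - V r\<bar> \<le> K * exp (lam * r)) \<longrightarrow> t \<in> {0..T} \<longrightarrow>
       \<bar>Tf U t - Tf V t\<bar> \<le> K / 2 * exp (lam * t))"

lemma PB_D: "PB T MV MD \<Longrightarrow> good V V' \<Longrightarrow> r \<in> {-h..T} \<Longrightarrow> \<bar>Tf V r\<bar> \<le> MV \<and> \<bar>Td V r\<bar> \<le> MD"
  unfolding PB_def by blast
lemma PG_D: "PG T MV MD C lam \<Longrightarrow> good U U' \<Longrightarrow> good V V' \<Longrightarrow> (\<And>r. r \<in> {-h..T} \<Longrightarrow> \<bar>U r\<bar> \<le> MV \<and> \<bar>U' r\<bar> \<le> MD) \<Longrightarrow>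
       (\<And>r. r \<in> {-h..T} \<Longrightarrow> \<bar>V r\<bar> \<le> MV \<and> \<bar>V' r\<bar> \<le> MD) \<Longrightarrow>
       (\<And>r. r \<in> {0..T} \<Longrightarrow> \<bar>U r - V r\<bar> \<le> K * exp (lam * r)) \<Longrightarrow> s \<in> {0..T} \<Longrightarrow>
       \<bar>gf U s - gf V s\<bar> \<le> C * K * exp (lam * s)"
  unfolding PG_def by blast
lemma PT_D: "PT T MV MD lam \<Longrightarrow> good U U' \<Longrightarrow> good V V' \<Longrightarrow> (\<And>r. r \<in> {-h..T} \<Longrightarrow> \<bar>U r\<bar> \<le> MV \<and> \<bar>U' r\<bar> \<le> MD) \<Longrightarrow>
       (\<And>r. r \<in> {-h..T} \<Longrightarrow> \<bar>V r\<bar> \<le> MV \<and> \<bar>V' r\<bar> \<le> MD) \<Longrightarrow>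
       (\<And>r. r \<in> {0..T} \<Longrightarrow> \<bar>U r - V r\<bar> \<le> K * exp (lam * r)) \<Longrightarrow> t \<in> {0..T} \<Longrightarrow>
       \<bar>Tf U t - Tf V t\<bar> \<le> K / 2 * exp (lam * t)"
  unfolding PT_def by blast

lemma cst_exist:
  assumes T0: "T \<ge> 0"
  shows "\<exists>MV MD C lam. lam \<ge> 1 \<and> C \<ge> 0 \<and> MV \<ge> 0 \<and> MD \<ge> 0 \<and> PB T MV MD \<and> PG T MV MD C lam \<and> PT T MV MD lam"
proof -
  obtain Q where Q0: "Q \<ge> 0" and Q: "\<And>x. x > Rm \<Longrightarrow> \<bar>q x\<bar> \<le> Q" using q_bound by blast
  have ac: "continuous_on {-h..0} a"
    by (rule DERIV_continuous_on[of _ _ "dr h a"]) (use C1fun_dr(2)[OF hpos aC1] in auto)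
  have bc: "continuous_on {-h..0} b"
    by (rule DERIV_continuous_on[of _ _ "dr h b"]) (use C1fun_dr(2)[OF hpos bC1] in auto)
  obtain M1 where M1: "M1 \<ge> 0" "\<And>r. r \<in> {-h..0} \<Longrightarrow> \<bar>a r\<bar> \<le> M1" using cont_bound[OF ac] by blast
  obtain M2 where M2: "M2 \<ge> 0" "\<And>r. r \<in> {-h..0} \<Longrightarrow> \<bar>dr h a r\<bar> \<le> M2"
    using cont_bound[OF C1fun_dr(1)[OF hpos aC1]] by blast
  obtain M3 where M3: "M3 \<ge> 0" "\<And>r. r \<in> {-h..0} \<Longrightarrow> \<bar>b r\<bar> \<le> M3" using cont_bound[OF bc] by blast
  obtain M4 where M4: "M4 \<ge> 0" "\<And>r. r \<in> {-h..0} \<Longrightarrow> \<bar>dr h b r\<bar> \<le> M4"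
    using cont_bound[OF C1fun_dr(1)[OF hpos bC1]] by blast
  define Ma where "Ma = M1 + M2 + M3 + M4"
  have Ma0: "Ma \<ge> 0" using M1 M2 M3 M4 by (simp add: Ma_def)
  have Mab: "\<bar>a \<theta>\<bar> \<le> Ma \<and> \<bar>dr h a \<theta>\<bar> \<le> Ma" if "\<theta> \<in> {-h..0}" for \<theta>
    using M1(2)[OF that] M2(2)[OF that] M3 M4 M1 M2 unfolding Ma_def by linarith
  have Mbb: "\<bar>b \<theta>\<bar> \<le> Ma \<and> \<bar>dr h b \<theta>\<bar> \<le> Ma" if "\<theta> \<in> {-h..0}" for \<theta>
    using M3(2)[OF that] M4(2)[OF that] M3 M4 M1 M2 unfolding Ma_def by linarith
  define MW where "MW = Ma + a 0 * exp (Q * T) * (1 + Q)"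
  have MW0: "MW \<ge> 0" unfolding MW_def using Ma0 a_nn'[of 0] Q0 by simp
  have WB: "\<bar>Wf V r\<bar> \<le> MW \<and> \<bar>Wd V r\<bar> \<le> MW" if "good V V'" "r \<in> {-h..T}" for V V' r
    unfolding MW_def by (rule W_bound[OF that(1) Q0 Q Mab Ma0 that(2)])
  obtain J where J0: "J \<ge> 0" and J: "\<And>V V' s. good V V' \<Longrightarrow> (\<And>r. r \<in> {-h..T} \<Longrightarrow> \<bar>Wf V r\<bar> \<le> MW \<and> \<bar>Wd V r\<bar> \<le> MW) \<Longrightarrow>
      s \<in> {0..T} \<Longrightarrow> \<bar>gf V s\<bar> \<le> J"
    using gf_bound[of T MW] by metis
  have JB: "\<bar>gf V s\<bar> \<le> J" if "good V V'" "s \<in> {0..T}" for V V' s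
    by (rule J[OF that(1) WB[OF that(1)] that(2)])
  define MV where "MV = Ma + b 0 + J * T"
  define MD where "MD = Ma + J + \<mu> * MV"
  have MV0: "MV \<ge> 0" unfolding MV_def using Ma0 b_nn'[of 0] J0 T0 by simp
  have MD0: "MD \<ge> 0" unfolding MD_def using Ma0 J0 MV0 mupos by simp
  have P1: "\<bar>Tf V r\<bar> \<le> MV \<and> \<bar>Td V r\<bar> \<le> MD" if "good V V'" "r \<in> {-h..T}" for V V' r
    using Tf_bound[OF that(1) T0 J0 JB[OF that(1)] Mbb Ma0 that(2)] unfolding MV_def MD_def by simp
  define Mall where "Mall = MW + MV + MD"
  obtain L where L0: "L \<ge> 0" and L: "\<And>\<phi> \<xi> E. \<phi> \<in> Uplus h \<Longrightarrow> \<xi> \<in> Uplus h \<Longrightarrow> n1p h \<phi> \<le> 4 * Mall \<Longrightarrow> n1p h \<xi> \<le> 4 * Mall \<Longrightarrow>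
     (\<And>\<theta>. \<theta> \<in> {-h..0} \<Longrightarrow> \<bar>fst (psub \<phi> \<xi>) \<theta>\<bar> + \<bar>snd (psub \<phi> \<xi>) \<theta>\<bar> \<le> E) \<Longrightarrow>
     \<bar>j \<phi> - j \<xi>\<bar> \<le> L * E"
    using j_lip[of "4 * Mall"] by metis
  obtain Lq where Lq0: "Lq \<ge> 0" and Lq: "\<And>x y. x \<in> {0..MV} \<Longrightarrow> y \<in> {0..MV} \<Longrightarrow> \<bar>q x - q y\<bar> \<le> Lq * \<bar>x - y\<bar>"
    using q_lip[of MV] by metis
  define C1 where "C1 = a 0 * exp (Q * T) * Lq"
  have C10: "C1 \<ge> 0" unfolding C1_def using a_nn'[of 0] Lq0 by simp
  define C where "C = L * (C1 + 1)"
  have C0: "C \<ge> 0" unfolding C_def using L0 C10 by simp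
  define lam where "lam = max 1 (2 * C)"
  have l1: "lam \<ge> 1" and lC: "2 * C \<le> lam" by (auto simp: lam_def)
  have P2: "\<bar>gf U s - gf V s\<bar> \<le> C * K * exp (lam * s)"
    if gU: "good U U'" and gV: "good V V'" and BU: "\<And>r. r \<in> {-h..T} \<Longrightarrow> \<bar>U r\<bar> \<le> MV \<and> \<bar>U' r\<bar> \<le> MD"
      and BV: "\<And>r. r \<in> {-h..T} \<Longrightarrow> \<bar>V r\<bar> \<le> MV \<and> \<bar>V' r\<bar> \<le> MD"
      and K: "\<And>r. r \<in> {0..T} \<Longrightarrow> \<bar>U r - V r\<bar> \<le> K * exp (lam * r)" and s: "s \<in> {0..T}" for U U' V V' K s
  proof -
    have "\<bar>U 0 - V 0\<bar> \<le> K" using K[of 0] T0 by simp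
    then have K0: "K \<ge> 0" by (meson abs_ge_zero order_trans)
    have UB: "U r \<le> MV" if "r \<in> {0..T}" for r
    proof -
      have "r \<in> {-h..T}" using that hpos by auto
      then show ?thesis using BU[of r] by linarith
    qed
    have VB: "V r \<le> MV" if "r \<in> {0..T}" for r
    proof -
      have "r \<in> {-h..T}" using that hpos by auto
      then show ?thesis using BV[of r] by linarith
    qed
    have WD: "\<bar>Wf U r - Wf V r\<bar> \<le> C1 * K * exp (lam * r)" if r: "r \<in> {0..T}" for r
      using W_diff[OF gU gV Q0 Q Lq0 Lq UB VB l1 K K0 r] unfolding C1_def .
    have MU: "\<bar>Wf U r\<bar> \<le> Mall \<and> \<bar>Wd U r\<bar> \<le> Mall \<and> \<bar>U r\<bar> \<le> Mall \<and> \<bar>U' r\<bar> \<le> Mall" if "r \<in> {-h..T}" for r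
      using WB[OF gU that] BU[OF that] MW0 MV0 MD0 unfolding Mall_def by linarith
    have MV': "\<bar>Wf V r\<bar> \<le> Mall \<and> \<bar>Wd V r\<bar> \<le> Mall \<and> \<bar>V r\<bar> \<le> Mall \<and> \<bar>V' r\<bar> \<le> Mall" if "r \<in> {-h..T}" for r
      using WB[OF gV that] BV[OF that] MW0 MV0 MD0 unfolding Mall_def by linarith
    have "\<bar>gf U s - gf V s\<bar> \<le> L * ((C1 + 1) * K * exp (lam * s))"
      by (rule g_diff[OF gU gV L0 L MU MV' WD K C10 K0 _ s]) (use l1 in auto)
    then show ?thesis unfolding C_def by (simp add: mult.assoc)
  qed
  have 1: "PB T MV MD" unfolding PB_def using P1 by blast
  have 2: "PG T MV MD C lam" unfolding PG_def
  proof (intro allI impI)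
    fix U U' V V' K s
    assume "good U U'" "good V V'" "\<forall>r\<in>{-h..T}. \<bar>U r\<bar> \<le> MV \<and> \<bar>U' r\<bar> \<le> MD"
      "\<forall>r\<in>{-h..T}. \<bar>V r\<bar> \<le> MV \<and> \<bar>V' r\<bar> \<le> MD" "\<forall>r\<in>{0..T}. \<bar>U r - V r\<bar> \<le> K * exp (lam * r)" "s \<in> {0..T}"
    then show "\<bar>gf U s - gf V s\<bar> \<le> C * K * exp (lam * s)" by (intro P2) auto
  qed
  have 3: "PT T MV MD lam" unfolding PT_def
  proof (intro allI impI)
    fix U U' V V' K t
    assume gU: "good U U'" and gV: "good V V'" and BU: "\<forall>r\<in>{-h..T}. \<bar>U r\<bar> \<le> MV \<and> \<bar>U' r\<bar> \<le> MD"
      and BV: "\<forall>r\<in>{-h..T}. \<bar>V r\<bar> \<le> MV \<and> \<bar>V' r\<bar> \<le> MD" and K: "\<forall>r\<in>{0..T}. \<bar>U r - V r\<bar> \<le> K * exp (lam * r)" and t: "t \<in> {0..T}"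
    have "0 \<in> {0..T}" using T0 by simp
    then have "\<bar>U 0 - V 0\<bar> \<le> K * exp (lam * 0)" using K by blast
    then have "\<bar>U 0 - V 0\<bar> \<le> K" by simp
    then have K0: "K \<ge> 0" by (meson abs_ge_zero order_trans)
    have G: "\<bar>gf U s - gf V s\<bar> \<le> C * K * exp (lam * s)" if "s \<in> {0..T}" for s
      using gU gV BU BV K that by (intro P2) auto
    show "\<bar>Tf U t - Tf V t\<bar> \<le> K / 2 * exp (lam * t)"
      by (rule T_diff[OF gU gV C0 G l1 lC K0 t])
  qed
  show ?thesis
    by (rule exI[of _ MV], rule exI[of _ MD], rule exI[of _ C], rule exI[of _ lam]) (intro conjI l1 C0 MV0 MD0 1 2 3)
qed

end

context cellphi begin

definition V0 :: "real \<Rightarrow> real" where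
  "V0 t = (if t \<le> 0 then b t else b 0 * exp (- \<mu> * t) + j (a, b) * (1 - exp (- t)))"
definition V0' :: "real \<Rightarrow> real" where
  "V0' t = (if t \<le> 0 then dr h b t else b 0 * (exp (- \<mu> * t) * (- \<mu>)) + j (a, b) * exp (- t))"

lemma V0_good: "good V0 V0'"
proof -
  let ?g = "\<lambda>t. b 0 * exp (- \<mu> * t) + j (a, b) * (1 - exp (- t))"
  let ?g' = "\<lambda>t. b 0 * (exp (- \<mu> * t) * (- \<mu>)) + j (a, b) * exp (- t)"
  have gd: "(?g has_real_derivative ?g' t) (at t within {0..})" for t
    by (auto intro!: derivative_eq_intros)
  have gc: "continuous_on {0..} ?g'" by (intro continuous_intros)
  have e1: "dr h b 0 = ?g' 0" using b_comp by simp
  note G = glue[of h b "dr h b" ?g ?g', OF _ C1fun_dr(2)[OF hpos bC1] C1fun_dr(1)[OF hpos bC1] gd gc _ e1]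
  have d: "\<And>t. t \<ge> -h \<Longrightarrow> (V0 has_real_derivative V0' t) (at t within {-h..})"
    using G(1) hpos unfolding V0_def[abs_def] V0'_def[abs_def] by simp
  have c: "continuous_on {-h..} V0'"
    using G(2) hpos unfolding V0_def[abs_def] V0'_def[abs_def] by simp
  have n: "V0 t \<ge> 0" if "t \<ge> 0" for t
  proof -
    have "j (a, b) \<ge> 0" using j_nn[OF phiU] .
    moreover have "1 - exp (- t) \<ge> 0" using that by simp
    ultimately show ?thesis using b_nn'[of 0] b_nn'[of t] by (simp add: V0_def)
  qed
  show ?thesis unfolding good_def using d c n by (simp add: V0_def)
qed

definition Vn :: "nat \<Rightarrow> real \<Rightarrow> real" where "Vn n = (Tf ^^ Suc n) V0"
definition Dn :: "nat \<Rightarrow> real \<Rightarrow> real" where "Dn n = Td ((Tf ^^ n) V0)"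

lemma iter_good: "\<exists>D. good ((Tf ^^ n) V0) D"
proof (induction n)
  case 0 then show ?case using V0_good by auto
next
  case (Suc n)
  then obtain D where "good ((Tf ^^ n) V0) D" by blast
  then show ?case using T_good by auto
qed

lemma Vn_good: "good (Vn n) (Dn n)"
proof -
  obtain D where "good ((Tf ^^ n) V0) D" using iter_good by blast
  then show ?thesis unfolding Vn_def Dn_def using T_good by simp
qed

lemma Vn_Suc: "Vn (Suc n) = Tf (Vn n)" by (simp add: Vn_def)
lemma Dn_Suc: "Dn (Suc n) = Td (Vn n)" by (simp add: Vn_def Dn_def)

lemma Vn_neg: "t \<le> 0 \<Longrightarrow> Vn n t = b t" using goodD(1)[OF Vn_good] .

lemma iter_est:
  assumes T0: "T \<ge> 0" and l1: "lam \<ge> 1" and C0: "C \<ge> 0" and MV0: "MV \<ge> 0"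
    and PB: "PB T MV MD" and PG: "PG T MV MD C lam" and PT: "PT T MV MD lam"
  shows "\<And>n r. r \<in> {-h..T} \<Longrightarrow> \<bar>Vn n r\<bar> \<le> MV \<and> \<bar>Dn n r\<bar> \<le> MD"
    "\<And>n r. r \<in> {0..T} \<Longrightarrow> \<bar>Vn (Suc n) r - Vn n r\<bar> \<le> (2 * MV / 2^n) * exp (lam * r)"
    "\<And>n s. s \<in> {0..T} \<Longrightarrow> \<bar>gf (Vn (Suc n)) s - gf (Vn n) s\<bar> \<le> C * (2 * MV / 2^n) * exp (lam * s)"
proof -
  show B: "\<And>n r. r \<in> {-h..T} \<Longrightarrow> \<bar>Vn n r\<bar> \<le> MV \<and> \<bar>Dn n r\<bar> \<le> MD"
  proof -
    fix n r assume r: "r \<in> {-h..T}"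
    obtain D where "good ((Tf ^^ n) V0) D" using iter_good by blast
    from PB_D[OF PB this r] show "\<bar>Vn n r\<bar> \<le> MV \<and> \<bar>Dn n r\<bar> \<le> MD" by (simp add: Vn_def Dn_def)
  qed
  show D: "\<And>n r. r \<in> {0..T} \<Longrightarrow> \<bar>Vn (Suc n) r - Vn n r\<bar> \<le> (2 * MV / 2^n) * exp (lam * r)"
  proof -
    fix n
    show "\<And>r. r \<in> {0..T} \<Longrightarrow> \<bar>Vn (Suc n) r - Vn n r\<bar> \<le> (2 * MV / 2^n) * exp (lam * r)"
    proof (induction n)
      case 0
      fix r :: real assume r: "r \<in> {0..T}"
      then have r': "r \<in> {-h..T}" using hpos by auto
      have "\<bar>Vn (Suc 0) r - Vn 0 r\<bar> \<le> 2 * MV" using B[OF r', of 0] B[OF r', of "Suc 0"] by linarith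
      also have "\<dots> \<le> 2 * MV * exp (lam * r)"
      proof -
        have "1 \<le> exp (lam * r)" using r l1 by simp
        then show ?thesis using MV0 mult_left_mono[of 1 "exp (lam * r)" "2 * MV"] by simp
      qed
      finally show "\<bar>Vn (Suc 0) r - Vn 0 r\<bar> \<le> (2 * MV / 2^0) * exp (lam * r)" by simp
    next
      case (Suc n)
      fix r :: real assume r: "r \<in> {0..T}"
      have "\<bar>Tf (Vn (Suc n)) r - Tf (Vn n) r\<bar> \<le> (2 * MV / 2^n) / 2 * exp (lam * r)"
        by (rule PT_D[OF PT Vn_good Vn_good B B Suc.IH r])
      then show "\<bar>Vn (Suc (Suc n)) r - Vn (Suc n) r\<bar> \<le> (2 * MV / 2^Suc n) * exp (lam * r)"
        by (simp add: Vn_Suc[symmetric])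
    qed
  qed
  show "\<And>n s. s \<in> {0..T} \<Longrightarrow> \<bar>gf (Vn (Suc n)) s - gf (Vn n) s\<bar> \<le> C * (2 * MV / 2^n) * exp (lam * s)"
    by (rule PG_D[OF PG Vn_good Vn_good B B D])
qed

end

lemma le_small:
  fixes x M A :: real
  assumes "\<And>n. x \<le> M + A / 2^n"
  shows "x \<le> M"
proof (rule ccontr)
  assume "\<not> x \<le> M"
  then have "\<bar>x - M\<bar> \<le> A / 2^n" for n using assms[of n] by simp
  then have "x - M = 0" by (rule small_zero)
  with \<open>\<not> x \<le> M\<close> show False by simp
qed

lemma tail_small:
  fixes z A :: real
  assumes "\<And>n. \<bar>z\<bar> \<le> A / 2^n"
  shows "\<And>e. e > 0 \<Longrightarrow> \<exists>N. \<forall>n\<ge>N. A / 2^n < e"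
proof -
  fix e :: real assume e: "e > 0"
  have l: "(\<lambda>n. A / 2^n) \<longlonglongrightarrow> 0" by (rule LIMSEQ_divide_realpow_zero) simp
  from LIMSEQ_D[OF l e] obtain N where "\<And>n. n \<ge> N \<Longrightarrow> norm (A / 2^n - 0) < e" by blast
  then have "\<forall>n\<ge>N. \<bar>A\<bar> / 2^n < e" by simp
  moreover have "A / 2^n \<le> \<bar>A\<bar> / 2^n" for n :: nat by (rule divide_right_mono) auto
  ultimately have "\<forall>n\<ge>N. A / 2^n < e" by (meson order_le_less_trans)
  then show "\<exists>N. \<forall>n\<ge>N. A / 2^n < e" by (rule exI)
qed

context cellphi begin

definition Vlim :: "real \<Rightarrow> real" where "Vlim t = lim (\<lambda>n. Vn n t)"
definition Glim :: "real \<Rightarrow> real" where "Glim s = lim (\<lambda>n. gf (Vn n) s)"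

lemma lim_bounds:
  assumes T0: "T \<ge> 0" and l1: "lam \<ge> 1" and C0: "C \<ge> 0" and MV0: "MV \<ge> 0"
    and PB: "PB T MV MD" and PG: "PG T MV MD C lam" and PT: "PT T MV MD lam"
  shows "\<And>n r. r \<in> {-h..T} \<Longrightarrow> \<bar>Vn n r\<bar> \<le> MV \<and> \<bar>Dn n r\<bar> \<le> MD"
    "\<And>n r. r \<in> {0..T} \<Longrightarrow> \<bar>Vlim r - Vn n r\<bar> \<le> (4 * MV * exp (lam * r)) / 2^n"
    "\<And>n s. s \<in> {0..T} \<Longrightarrow> \<bar>Glim s - gf (Vn n) s\<bar> \<le> (4 * C * MV * exp (lam * s)) / 2^n"
proof -
  note E = iter_est[OF T0 l1 C0 MV0 PB PG PT]
  have L1: "\<bar>Vlim r - Vn n r\<bar> \<le> (4 * MV * exp (lam * r)) / 2^n" if r: "r \<in> {0..T}" for n r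
  proof -
    have s: "\<bar>Vn (Suc m) r - Vn m r\<bar> \<le> (2 * MV * exp (lam * r)) / 2^m" for m
      using E(2)[OF r, of m] by simp
    have "\<bar>lim (\<lambda>m. Vn m r) - Vn n r\<bar> \<le> 2 * (2 * MV * exp (lam * r)) / 2^n"
      by (rule geom_conv(2)[of "\<lambda>m. Vn m r", OF s])
    then show ?thesis by (simp add: Vlim_def)
  qed
  have L2: "\<bar>Glim s - gf (Vn n) s\<bar> \<le> (4 * C * MV * exp (lam * s)) / 2^n" if s: "s \<in> {0..T}" for n s
  proof -
    have st: "\<bar>gf (Vn (Suc m)) s - gf (Vn m) s\<bar> \<le> (C * (2 * MV) * exp (lam * s)) / 2^m" for m
      using E(3)[OF s, of m] by simp
    have "\<bar>lim (\<lambda>m. gf (Vn m) s) - gf (Vn n) s\<bar> \<le> 2 * (C * (2 * MV) * exp (lam * s)) / 2^n"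
      by (rule geom_conv(2)[of "\<lambda>m. gf (Vn m) s", OF st])
    then show ?thesis by (simp add: Glim_def)
  qed
  show "\<And>n r. r \<in> {-h..T} \<Longrightarrow> \<bar>Vn n r\<bar> \<le> MV \<and> \<bar>Dn n r\<bar> \<le> MD" by (rule E(1))
  show "\<And>n r. r \<in> {0..T} \<Longrightarrow> \<bar>Vlim r - Vn n r\<bar> \<le> (4 * MV * exp (lam * r)) / 2^n" by (rule L1)
  show "\<And>n s. s \<in> {0..T} \<Longrightarrow> \<bar>Glim s - gf (Vn n) s\<bar> \<le> (4 * C * MV * exp (lam * s)) / 2^n" by (rule L2)
qed

end

lemma pow_tail:
  fixes A e :: real
  assumes e: "e > 0"
  shows "\<exists>N. \<forall>n\<ge>N. A / 2^n < e"
proof -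
  have l: "(\<lambda>n. A / 2^n) \<longlonglongrightarrow> 0" by (rule LIMSEQ_divide_realpow_zero) simp
  from LIMSEQ_D[OF l e] obtain N where N: "\<And>n. n \<ge> N \<Longrightarrow> norm (A / 2^n - 0) < e" by blast
  have "A / 2^n < e" if "n \<ge> N" for n
  proof -
    have "A / 2^n \<le> \<bar>A / 2^n\<bar>" by (rule abs_ge_self)
    also have "\<dots> < e" using N[OF that] by simp
    finally show ?thesis .
  qed
  then show ?thesis by blast
qed

context cellphi begin

definition Fg :: "(real \<Rightarrow> real) \<Rightarrow> real \<Rightarrow> real" where
  "Fg g t = exp (- \<mu> * t) * (b 0 + integral {0..t} (\<lambda>s. exp (\<mu> * s) * g s))"

lemma Tp_Fg: "Tp V = Fg (gf V)" by (simp add: Tp_def Fg_def fun_eq_iff)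

lemma Fg_deriv:
  assumes c0: "continuous_on {0..} g" and t: "t \<ge> 0"
  shows "(Fg g has_real_derivative g t - \<mu> * Fg g t) (at t within {0..})"
proof -
  have c: "continuous_on {0..} (\<lambda>s. exp (\<mu> * s) * g s)" by (intro continuous_intros c0)
  have I: "((\<lambda>t. integral {0..t} (\<lambda>s. exp (\<mu> * s) * g s)) has_real_derivative exp (\<mu> * t) * g t) (at t within {0..})"
    by (rule FTC0[OF c t])
  have E: "((\<lambda>t. exp (- \<mu> * t)) has_real_derivative exp (- \<mu> * t) * (- \<mu>)) (at t within {0..})"
    by (auto intro!: derivative_eq_intros)
  have D: "((\<lambda>t. exp (- \<mu> * t) * (b 0 + integral {0..t} (\<lambda>s. exp (\<mu> * s) * g s))) has_real_derivative
     exp (- \<mu> * t) * (- \<mu>) * (b 0 + integral {0..t} (\<lambda>s. exp (\<mu> * s) * g s)) + (0 + exp (\<mu> * t) * g t) * exp (- \<mu> * t))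
     (at t within {0..})"
    by (rule DERIV_mult[OF E DERIV_add[OF DERIV_const I]])
  have eq: "exp (- \<mu> * t) * (- \<mu>) * (b 0 + integral {0..t} (\<lambda>s. exp (\<mu> * s) * g s)) + (0 + exp (\<mu> * t) * g t) * exp (- \<mu> * t)
      = g t - \<mu> * Fg g t"
  proof -
    have "exp (\<mu> * t) * exp (- \<mu> * t) = 1" by (simp add: exp_add[symmetric])
    then show ?thesis unfolding Fg_def by (simp add: algebra_simps)
  qed
  have F: "Fg g = (\<lambda>t. exp (- \<mu> * t) * (b 0 + integral {0..t} (\<lambda>s. exp (\<mu> * s) * g s)))"
    by (rule ext) (simp add: Fg_def)
  show ?thesis using D unfolding eq F[symmetric] .
qed

lemma Fg_diff:
  assumes c1: "continuous_on {0..} g1" and c2: "continuous_on {0..} g2" and t: "t \<ge> 0"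
    and B: "\<And>s. s \<in> {0..t} \<Longrightarrow> \<bar>g1 s - g2 s\<bar> \<le> B"
  shows "\<bar>Fg g1 t - Fg g2 t\<bar> \<le> t * B"
proof -
  have cc1: "continuous_on {0..t} (\<lambda>s. exp (\<mu> * s) * g1 s)"
    by (intro continuous_intros continuous_on_subset[OF c1]) auto
  have cc2: "continuous_on {0..t} (\<lambda>s. exp (\<mu> * s) * g2 s)"
    by (intro continuous_intros continuous_on_subset[OF c2]) auto
  note i1 = integrable_continuous_real[OF cc1] and i2 = integrable_continuous_real[OF cc2]
  have d: "integral {0..t} (\<lambda>s. exp (\<mu> * s) * g1 s) - integral {0..t} (\<lambda>s. exp (\<mu> * s) * g2 s)
      = integral {0..t} (\<lambda>s. exp (\<mu> * s) * g1 s - exp (\<mu> * s) * g2 s)"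
    by (rule integral_diff[OF i1 i2, symmetric])
  have "\<bar>integral {0..t} (\<lambda>s. exp (\<mu> * s) * g1 s - exp (\<mu> * s) * g2 s)\<bar> \<le> integral {0..t} (\<lambda>s. exp (\<mu> * t) * B)"
    unfolding real_norm_def[symmetric]
  proof (rule Henstock_Kurzweil_Integration.integral_norm_bound_integral)
    show "(\<lambda>s. exp (\<mu> * s) * g1 s - exp (\<mu> * s) * g2 s) integrable_on {0..t}" by (rule integrable_diff[OF i1 i2])
    show "(\<lambda>s. exp (\<mu> * t) * B) integrable_on {0..t}" by (rule integrable_continuous_real) (rule continuous_on_const)
    fix s assume s: "s \<in> {0..t}"
    have e1: "exp (\<mu> * s) \<le> exp (\<mu> * t)" using s mupos by (auto intro: mult_left_mono)
    have "\<bar>exp (\<mu> * s) * g1 s - exp (\<mu> * s) * g2 s\<bar> = exp (\<mu> * s) * \<bar>g1 s - g2 s\<bar>"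
      by (simp add: abs_mult flip: right_diff_distrib)
    also have "\<dots> \<le> exp (\<mu> * t) * B" by (rule mult_mono[OF e1 B[OF s]]) auto
    finally show "norm (exp (\<mu> * s) * g1 s - exp (\<mu> * s) * g2 s) \<le> exp (\<mu> * t) * B" by simp
  qed
  also have "\<dots> = t * (exp (\<mu> * t) * B)" using t by simp
  finally have I: "\<bar>integral {0..t} (\<lambda>s. exp (\<mu> * s) * g1 s) - integral {0..t} (\<lambda>s. exp (\<mu> * s) * g2 s)\<bar>
      \<le> t * (exp (\<mu> * t) * B)" unfolding d .
  have "\<bar>Fg g1 t - Fg g2 t\<bar> = exp (- \<mu> * t) * \<bar>integral {0..t} (\<lambda>s. exp (\<mu> * s) * g1 s) - integral {0..t} (\<lambda>s. exp (\<mu> * s) * g2 s)\<bar>"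
    by (simp add: Fg_def abs_mult flip: right_diff_distrib)
  also have "\<dots> \<le> exp (- \<mu> * t) * (t * (exp (\<mu> * t) * B))" by (rule mult_left_mono[OF I]) simp
  also have "\<dots> = t * B" by (simp add: mult.assoc[symmetric] mult.commute[of "exp (- \<mu> * t)"] flip: exp_add)
  finally show ?thesis .
qed

lemma get_consts:
  assumes T0: "T \<ge> 0"
  obtains MV MD C lam where "lam \<ge> 1" "C \<ge> 0" "MV \<ge> 0" "MD \<ge> 0" "PB T MV MD" "PG T MV MD C lam" "PT T MV MD lam"
  using cst_exist[OF T0] by auto

lemma G_cont: "continuous_on {0..} Glim"
proof (rule cont_on_ge0)
  fix T :: real assume T: "T > 0"
  obtain MV MD C lam where l1: "lam \<ge> 1" and C0: "C \<ge> 0" and MV0: "MV \<ge> 0" and MD0: "MD \<ge> 0"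
    and PB: "PB T MV MD" and PG: "PG T MV MD C lam" and PT: "PT T MV MD lam"
    using cst_exist[of T] T by auto
  note LB = lim_bounds[OF _ l1 C0 MV0 PB PG PT]
  have ul: "uniform_limit {0..T} (\<lambda>n. gf (Vn n)) Glim sequentially"
  proof (rule uniform_limitI)
    fix e :: real assume e: "e > 0"
    obtain N where N: "\<And>n. n \<ge> N \<Longrightarrow> (4 * C * MV * exp (lam * T)) / 2^n < e" using pow_tail[OF e] by blast
    show "\<forall>\<^sub>F n in sequentially. \<forall>x\<in>{0..T}. dist (gf (Vn n) x) (Glim x) < e"
      unfolding eventually_sequentially
    proof (intro exI[of _ N] allI impI ballI)
      fix n x assume n: "n \<ge> N" and x: "x \<in> {0..T}"
      have "dist (gf (Vn n) x) (Glim x) = \<bar>Glim x - gf (Vn n) x\<bar>" by (simp add: dist_real_def abs_minus_commute)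
      also have "\<dots> \<le> (4 * C * MV * exp (lam * x)) / 2^n" using LB(3)[OF _ x] T by simp
      also have "\<dots> \<le> (4 * C * MV * exp (lam * T)) / 2^n"
      proof -
        have "exp (lam * x) \<le> exp (lam * T)" using x l1 by (auto intro: mult_left_mono)
        then have "4 * C * MV * exp (lam * x) \<le> 4 * C * MV * exp (lam * T)" using C0 MV0 by (intro mult_left_mono) auto
        then show ?thesis by (rule divide_right_mono) simp
      qed
      also have "\<dots> < e" by (rule N[OF n])
      finally show "dist (gf (Vn n) x) (Glim x) < e" .
    qed
  qed
  show "continuous_on {0..T} Glim"
  proof (rule uniform_limit_theorem[OF _ ul])
    show "\<forall>\<^sub>F n in sequentially. continuous_on {0..T} (gf (Vn n))"
      by (intro always_eventually allI continuous_on_subset[OF gf_cont[OF Vn_good]]) auto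
  qed simp
qed

lemma G0: "Glim 0 = j (a, b)"
  unfolding Glim_def using gf0[OF Vn_good] by simp

lemma G_nn: assumes s: "s \<ge> 0" shows "Glim s \<ge> 0"
proof -
  obtain MV MD C lam where l1: "lam \<ge> 1" and C0: "C \<ge> 0" and MV0: "MV \<ge> 0" and MD0: "MD \<ge> 0"
    and PB: "PB s MV MD" and PG: "PG s MV MD C lam" and PT: "PT s MV MD lam"
    using cst_exist[of s] s by auto
  note LB = lim_bounds[OF s l1 C0 MV0 PB PG PT]
  have "- Glim s \<le> 0 + (4 * C * MV * exp (lam * s)) / 2^n" for n
    using LB(3)[of s n] gf_nn[OF Vn_good, of s n] s by simp
  then have "- Glim s \<le> 0" by (rule le_small)
  then show ?thesis by simp
qed

end

context cellphi begin

definition Vs :: "real \<Rightarrow> real" where "Vs t = (if t \<le> 0 then b t else Fg Glim t)"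
definition Vs' :: "real \<Rightarrow> real" where "Vs' t = (if t \<le> 0 then dr h b t else Glim t - \<mu> * Fg Glim t)"

lemma Fg0: "Fg g 0 = b 0" by (simp add: Fg_def)

lemma Fg_nn:
  assumes c: "continuous_on {0..} g" and n: "\<And>s. s \<ge> 0 \<Longrightarrow> g s \<ge> 0" and t: "t \<ge> 0"
  shows "Fg g t \<ge> 0"
proof -
  have cc: "continuous_on {0..t} (\<lambda>s. exp (\<mu> * s) * g s)"
    by (intro continuous_intros continuous_on_subset[OF c]) auto
  have "0 \<le> integral {0..t} (\<lambda>s. exp (\<mu> * s) * g s)"
    by (rule integral_nonneg[OF integrable_continuous_real[OF cc]]) (use n in auto)
  then show ?thesis unfolding Fg_def using b_nn'[of 0] by simp
qed

lemma Vs_good: "good Vs Vs'"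
proof -
  have Fc: "continuous_on {0..} (Fg Glim)"
    by (rule DERIV_continuous_on[of _ _ "\<lambda>t. Glim t - \<mu> * Fg Glim t"]) (use Fg_deriv[OF G_cont] in auto)
  have gc: "continuous_on {0..} (\<lambda>t. Glim t - \<mu> * Fg Glim t)"
    by (intro continuous_intros G_cont Fc)
  have e1: "dr h b 0 = Glim 0 - \<mu> * Fg Glim 0" using b_comp G0 by (simp add: Fg0)
  note G = glue[of h b "dr h b" "Fg Glim" "\<lambda>t. Glim t - \<mu> * Fg Glim t", OF _ C1fun_dr(2)[OF hpos bC1] C1fun_dr(1)[OF hpos bC1]
      Fg_deriv[OF G_cont] gc _ e1]
  have d: "\<And>t. t \<ge> -h \<Longrightarrow> (Vs has_real_derivative Vs' t) (at t within {-h..})"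
    using G(1) hpos unfolding Vs_def[abs_def] Vs'_def[abs_def] by (simp add: Fg0)
  have c: "continuous_on {-h..} Vs'"
    using G(2) hpos unfolding Vs_def[abs_def] Vs'_def[abs_def] by (simp add: Fg0)
  have n: "\<And>t. t \<ge> 0 \<Longrightarrow> Vs t \<ge> 0" using Fg_nn[OF G_cont G_nn] b_nn' by (simp add: Vs_def)
  show ?thesis unfolding good_def using d c n by (simp add: Vs_def)
qed

lemma Vn_pos: "t > 0 \<Longrightarrow> Vn (Suc n) t = Fg (gf (Vn n)) t"
  by (simp add: Vn_Suc Tf_def Tp_Fg)

lemma Dn_pos: "t > 0 \<Longrightarrow> Dn (Suc n) t = gf (Vn n) t - \<mu> * Vn (Suc n) t"
  by (simp add: Dn_Suc Td_def Vn_Suc Tf_def)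

lemma Vs_Vlim: assumes t: "t \<ge> 0" shows "Vs t = Vlim t"
proof (cases "t = 0")
  case True
  then show ?thesis using Vn_neg[of 0] by (simp add: Vs_def Vlim_def)
next
  case False
  then have t0: "t > 0" using t by simp
  obtain MV MD C lam where l1: "lam \<ge> 1" and C0: "C \<ge> 0" and MV0: "MV \<ge> 0" and MD0: "MD \<ge> 0"
    and PB: "PB t MV MD" and PG: "PG t MV MD C lam" and PT: "PT t MV MD lam"
    using cst_exist[of t] t by auto
  note LB = lim_bounds[OF t l1 C0 MV0 PB PG PT]
  have "\<bar>Vs t - Vlim t\<bar> \<le> (t * (4 * C * MV * exp (lam * t)) + 4 * MV * exp (lam * t)) / 2^n" for n
  proof -
    have "\<bar>Fg Glim t - Fg (gf (Vn n)) t\<bar> \<le> t * ((4 * C * MV * exp (lam * t)) / 2^n)"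
    proof (rule Fg_diff[OF G_cont gf_cont[OF Vn_good] t])
      fix s assume s: "s \<in> {0..t}"
      have "\<bar>Glim s - gf (Vn n) s\<bar> \<le> (4 * C * MV * exp (lam * s)) / 2^n" by (rule LB(3)[OF s])
      also have "\<dots> \<le> (4 * C * MV * exp (lam * t)) / 2^n"
      proof -
        have "exp (lam * s) \<le> exp (lam * t)" using s l1 by (auto intro: mult_left_mono)
        then have "4 * C * MV * exp (lam * s) \<le> 4 * C * MV * exp (lam * t)" using C0 MV0 by (intro mult_left_mono) auto
        then show ?thesis by (rule divide_right_mono) simp
      qed
      finally show "\<bar>Glim s - gf (Vn n) s\<bar> \<le> (4 * C * MV * exp (lam * t)) / 2^n" .
    qed
    then have A: "\<bar>Vs t - Vn (Suc n) t\<bar> \<le> t * ((4 * C * MV * exp (lam * t)) / 2^n)"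
      using t0 Vn_pos[OF t0, of n] by (simp add: Vs_def)
    have B: "\<bar>Vlim t - Vn (Suc n) t\<bar> \<le> (4 * MV * exp (lam * t)) / 2^(Suc n)" using LB(2)[of t "Suc n"] t by simp
    have B': "(4 * MV * exp (lam * t)) / 2^(Suc n) \<le> (4 * MV * exp (lam * t)) / 2^n"
      using MV0 by (intro divide_left_mono) auto
    have "t * ((4 * C * MV * exp (lam * t)) / 2^n) = (t * (4 * C * MV * exp (lam * t))) / 2^n" by simp
    then show ?thesis using A B B' by (simp add: add_divide_distrib)
  qed
  then have "Vs t - Vlim t = 0" by (rule small_zero)
  then show ?thesis by simp
qed

end

context cellphi begin

lemma Vs_props:
  assumes T0: "T \<ge> 0" and l1: "lam \<ge> 1" and C0: "C \<ge> 0" and MV0: "MV \<ge> 0" and MD0: "MD \<ge> 0"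
    and PB: "PB T MV MD" and PG: "PG T MV MD C lam" and PT: "PT T MV MD lam"
  shows "\<And>r n. r \<in> {0..T} \<Longrightarrow> \<bar>Vs r - Vn n r\<bar> \<le> (4 * MV / 2^n) * exp (lam * r)"
    "\<And>r. r \<in> {-h..T} \<Longrightarrow> \<bar>Vs r\<bar> \<le> MV \<and> \<bar>Vs' r\<bar> \<le> MD"
    "\<And>s. s \<in> {0..T} \<Longrightarrow> gf Vs s = Glim s"
proof -
  note LB = lim_bounds[OF T0 l1 C0 MV0 PB PG PT]
  show cl: "\<And>r n. r \<in> {0..T} \<Longrightarrow> \<bar>Vs r - Vn n r\<bar> \<le> (4 * MV / 2^n) * exp (lam * r)"
    using LB(2) Vs_Vlim by auto
  show bd: "\<And>r. r \<in> {-h..T} \<Longrightarrow> \<bar>Vs r\<bar> \<le> MV \<and> \<bar>Vs' r\<bar> \<le> MD"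
  proof -
    fix r assume r: "r \<in> {-h..T}"
    show "\<bar>Vs r\<bar> \<le> MV \<and> \<bar>Vs' r\<bar> \<le> MD"
    proof (cases "r \<le> 0")
      case True
      have "Vs r = Vn 0 r" using True Vn_neg[OF True, of 0] by (simp add: Vs_def)
      moreover have "Vs' r = Dn 0 r" using True by (simp add: Vs'_def Dn_def Td_def)
      ultimately show ?thesis using LB(1)[OF r, of 0] by simp
    next
      case False
      then have r0: "r \<in> {0..T}" "r > 0" using r by auto
      have "\<bar>Vs r\<bar> \<le> MV + (4 * MV * exp (lam * r)) / 2^n" for n
      proof -
        have "\<bar>Vs r\<bar> \<le> \<bar>Vn n r\<bar> + \<bar>Vs r - Vn n r\<bar>" by linarith
        then show ?thesis using LB(1)[OF r, of n] cl[OF r0(1), of n] by simp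
      qed
      then have A: "\<bar>Vs r\<bar> \<le> MV" by (rule le_small)
      have "\<bar>Vs' r\<bar> \<le> MD + (4 * C * MV * exp (lam * r) + \<mu> * (4 * MV * exp (lam * r))) / 2^n" for n
      proof -
        have e: "Vs' r = Glim r - \<mu> * Vs r" using r0 by (simp add: Vs'_def Vs_def)
        have "Vs' r = Dn (Suc n) r + (Glim r - gf (Vn n) r) - \<mu> * (Vs r - Vn (Suc n) r)"
          unfolding e Dn_pos[OF r0(2)] by (simp add: algebra_simps)
        moreover have "\<bar>A + B - \<mu> * Z\<bar> \<le> \<bar>A\<bar> + \<bar>B\<bar> + \<mu> * \<bar>Z\<bar>" for A B Z :: real
        proof -
          have "\<bar>A + B - \<mu> * Z\<bar> \<le> \<bar>A + B\<bar> + \<bar>\<mu> * Z\<bar>" by (rule abs_triangle_ineq4)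
          moreover have "\<bar>A + B\<bar> \<le> \<bar>A\<bar> + \<bar>B\<bar>" by (rule abs_triangle_ineq)
          moreover have "\<bar>\<mu> * Z\<bar> = \<mu> * \<bar>Z\<bar>" using mupos by (simp add: abs_mult)
          ultimately show ?thesis by linarith
        qed
        ultimately have "\<bar>Vs' r\<bar> \<le> \<bar>Dn (Suc n) r\<bar> + \<bar>Glim r - gf (Vn n) r\<bar> + \<mu> * \<bar>Vs r - Vn (Suc n) r\<bar>"
          by metis
        moreover have "\<bar>Dn (Suc n) r\<bar> \<le> MD" using LB(1)[OF r] by blast
        moreover have "\<bar>Glim r - gf (Vn n) r\<bar> \<le> (4 * C * MV * exp (lam * r)) / 2^n" by (rule LB(3)[OF r0(1)])
        moreover have "\<mu> * \<bar>Vs r - Vn (Suc n) r\<bar> \<le> \<mu> * ((4 * MV * exp (lam * r)) / 2^n)"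
        proof -
          have "\<bar>Vs r - Vn (Suc n) r\<bar> \<le> (4 * MV / 2^(Suc n)) * exp (lam * r)" by (rule cl[OF r0(1)])
          also have "\<dots> \<le> (4 * MV / 2^n) * exp (lam * r)"
            using MV0 by (intro mult_right_mono divide_left_mono) auto
          finally show ?thesis using mupos by (intro mult_left_mono) auto
        qed
        ultimately show ?thesis by (simp add: add_divide_distrib)
      qed
      then have B: "\<bar>Vs' r\<bar> \<le> MD" by (rule le_small)
      show ?thesis using A B by simp
    qed
  qed
  show "\<And>s. s \<in> {0..T} \<Longrightarrow> gf Vs s = Glim s"
  proof -
    fix s assume s: "s \<in> {0..T}"
    have "\<bar>gf Vs s - Glim s\<bar> \<le> (C * (4 * MV) * exp (lam * s) + 4 * C * MV * exp (lam * s)) / 2^n" for n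
    proof -
      have "\<bar>gf Vs s - gf (Vn n) s\<bar> \<le> C * (4 * MV / 2^n) * exp (lam * s)"
        by (rule PG_D[OF PG Vs_good Vn_good bd LB(1) cl s])
      moreover have "\<bar>Glim s - gf (Vn n) s\<bar> \<le> (4 * C * MV * exp (lam * s)) / 2^n" by (rule LB(3)[OF s])
      moreover have "C * (4 * MV / 2^n) * exp (lam * s) = (C * (4 * MV) * exp (lam * s)) / 2^n" by simp
      ultimately show ?thesis by (simp add: add_divide_distrib)
    qed
    then have "gf Vs s - Glim s = 0" by (rule small_zero)
    then show "gf Vs s = Glim s" by simp
  qed
qed

lemma gVs: "s \<ge> 0 \<Longrightarrow> gf Vs s = Glim s"
proof -
  assume s: "s \<ge> 0"
  obtain MV MD C lam where l1: "lam \<ge> 1" and C0: "C \<ge> 0" and MV0: "MV \<ge> 0" and MD0: "MD \<ge> 0"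
    and PB: "PB s MV MD" and PG: "PG s MV MD C lam" and PT: "PT s MV MD lam"
    using cst_exist[of s] s by auto
  show ?thesis by (rule Vs_props(3)[OF s l1 C0 MV0 MD0 PB PG PT]) (use s in auto)
qed

lemma Vs_fix: "Tf Vs = Vs"
proof
  fix t
  show "Tf Vs t = Vs t"
  proof (cases "t \<le> 0")
    case True then show ?thesis by (simp add: Tf_def Vs_def)
  next
    case False
    have "integral {0..t} (\<lambda>s. exp (\<mu> * s) * gf Vs s) = integral {0..t} (\<lambda>s. exp (\<mu> * s) * Glim s)"
      by (rule integral_cong) (simp add: gVs)
    then show ?thesis using False by (simp add: Tf_def Vs_def Tp_def Fg_def)
  qed
qed

lemma fix_unique:
  assumes gW: "good W W'" and fW: "Tf W = W" and t: "t \<ge> 0"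
  shows "W t = Vs t"
proof -
  obtain MV MD C lam where l1: "lam \<ge> 1" and C0: "C \<ge> 0" and MV0: "MV \<ge> 0" and MD0: "MD \<ge> 0"
    and PB: "PB t MV MD" and PG: "PG t MV MD C lam" and PT: "PT t MV MD lam"
    using cst_exist[of t] t by auto
  have gW': "good W (Td W)" using T_good[OF gW] fW by simp
  have gV': "good Vs (Td Vs)" using T_good[OF Vs_good] Vs_fix by simp
  have bW: "\<bar>W r\<bar> \<le> MV \<and> \<bar>Td W r\<bar> \<le> MD" if "r \<in> {-h..t}" for r
    using PB_D[OF PB gW that] fW by simp
  have bV: "\<bar>Vs r\<bar> \<le> MV \<and> \<bar>Td Vs r\<bar> \<le> MD" if "r \<in> {-h..t}" for r
    using PB_D[OF PB Vs_good that] Vs_fix by simp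
  have ind: "\<And>r. r \<in> {0..t} \<Longrightarrow> \<bar>W r - Vs r\<bar> \<le> (2 * MV / 2^n) * exp (lam * r)" for n
  proof (induction n)
    case 0
    fix r :: real assume r: "r \<in> {0..t}"
    then have r': "r \<in> {-h..t}" using hpos by auto
    have "\<bar>W r - Vs r\<bar> \<le> 2 * MV" using bW[OF r'] bV[OF r'] by linarith
    also have "\<dots> \<le> 2 * MV * exp (lam * r)"
    proof -
      have "1 \<le> exp (lam * r)" using r l1 by simp
      then show ?thesis using MV0 mult_left_mono[of 1 "exp (lam * r)" "2 * MV"] by simp
    qed
    finally show "\<bar>W r - Vs r\<bar> \<le> (2 * MV / 2^0) * exp (lam * r)" by simp
  next
    case (Suc n)
    fix r :: real assume r: "r \<in> {0..t}"
    have "\<bar>Tf W r - Tf Vs r\<bar> \<le> (2 * MV / 2^n) / 2 * exp (lam * r)"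
      by (rule PT_D[OF PT gW' gV' bW bV Suc.IH r])
    then show "\<bar>W r - Vs r\<bar> \<le> (2 * MV / 2^Suc n) * exp (lam * r)"
      using fW Vs_fix by simp
  qed
  have "\<bar>W t - Vs t\<bar> \<le> (2 * MV * exp (lam * t)) / 2^n" for n using ind[of t n] t by simp
  then have "W t - Vs t = 0" by (rule small_zero)
  then show ?thesis by simp
qed

end

context cellphi begin

lemma Uplus_Uset: "\<phi> \<in> Uplus h \<Longrightarrow> \<phi> \<in> Uset h Rm"
  using Rmneg by (auto simp: Uplus_def Uset_def intro: less_le_trans)

lemma Vs_sol: "is_sol h Rm q j \<mu> (a, b) (xs Vs)"
  unfolding is_sol_def
proof (rule conjI, rule exI[of _ "Wd Vs"], rule exI[of _ Vs'], intro conjI allI impI)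
  show "continuous_on {-h..} (Wd Vs)" by (rule W_good(2)[OF Vs_good])
  show "continuous_on {-h..} Vs'" by (rule goodD(2)[OF Vs_good])
  fix t :: real
  show "t \<ge> -h \<Longrightarrow> (fst (xs Vs) has_real_derivative Wd Vs t) (at t within {-h..})"
    using W_good(1)[OF Vs_good] by (simp add: xs_def)
  show "t \<ge> -h \<Longrightarrow> (snd (xs Vs) has_real_derivative Vs' t) (at t within {-h..})"
    using goodD(3)[OF Vs_good] by (simp add: xs_def)
  show "t > 0 \<Longrightarrow> Wd Vs t = q (snd (xs Vs) t) * fst (xs Vs) t"
    by (simp add: Wd_def Wf_def xs_def)
  show "t > 0 \<Longrightarrow> Vs' t = j (seg h (xs Vs) t) - \<mu> * snd (xs Vs) t"
    using gVs[of t] by (simp add: Vs'_def Vs_def xs_def gf_def)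
next
  show "seg h (xs Vs) 0 = (a, b) \<and> (\<forall>t\<ge>0. seg h (xs Vs) t \<in> Uset h Rm)"
    using seg0[OF Vs_good] Uplus_Uset seg_props(1)[OF Vs_good] by blast
qed

lemma Vs_Xplus:
  assumes t: "t \<ge> 0"
  shows "seg h (xs Vs) t \<in> Xplus h Rm q j \<mu>"
proof (cases "t = 0")
  case True then show ?thesis using seg0[OF Vs_good] phiX by simp
next
  case False
  then have t0: "t > 0" using t by simp
  have U: "seg h (xs Vs) t \<in> Uplus h" by (rule seg_props(1)[OF Vs_good t])
  have d1: "dr h (fst (seg h (xs Vs) t)) 0 = Wd Vs t" using seg_props(2)[OF Vs_good t, of 0] hpos by simp
  have d2: "dr h (snd (seg h (xs Vs) t)) 0 = Vs' t" using seg_props(3)[OF Vs_good t, of 0] hpos by simp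
  have f0: "fst (seg h (xs Vs) t) 0 = Wf Vs t" "snd (seg h (xs Vs) t) 0 = Vs t"
    using hpos by (simp_all add: seg_fst seg_snd)
  have "(dr h (fst (seg h (xs Vs) t)) 0, dr h (snd (seg h (xs Vs) t)) 0) = Fmap q j \<mu> (seg h (xs Vs) t)"
    unfolding d1 d2 Fmap_def f0 using t0 gVs[of t]
    by (simp add: Wd_def Wf_def Vs'_def Vs_def gf_def)
  then show ?thesis using U Uplus_Uset[OF U] by (simp add: Xplus_def Xset_def)
qed

end

lemma zero_deriv_const:
  fixes f D :: "real \<Rightarrow> real"
  assumes t: "t \<ge> 0" and d: "\<And>x. x \<in> {0..t} \<Longrightarrow> (f has_real_derivative D x) (at x within {0..t})"
    and z: "\<And>x. x \<in> {0<..t} \<Longrightarrow> D x = 0"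
  shows "f t = f 0"
proof -
  have c: "continuous_on {0..t} f" by (rule DERIV_continuous_on[OF d])
  show ?thesis
  proof (rule has_derivative_zero_unique_strong_interval[of "{0}" 0 t f "f 0" t])
    fix x assume x: "x \<in> {0..t} - {0}"
    then have "(f has_real_derivative 0) (at x within {0..t})" using d[of x] z[of x] by auto
    moreover have "((*) (0::real)) = (\<lambda>h. 0)" by auto
    ultimately show "(f has_derivative (\<lambda>h. 0)) (at x within {0..t})"
      by (simp add: has_field_derivative_def)
  qed (use t c in auto)
qed

context cellphi begin

lemma sol_unique:
  assumes ys: "is_sol h Rm q j \<mu> (a, b) y" and yX: "\<And>s. s \<ge> 0 \<Longrightarrow> seg h y s \<in> Xplus h Rm q j \<mu>"
    and s: "s \<ge> 0"
  shows "seg h y s = seg h (xs Vs) s"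
proof -
  obtain w' v' where wc: "continuous_on {-h..} w'" and vc: "continuous_on {-h..} v'"
    and dd: "\<And>t. t \<ge> -h \<Longrightarrow> (fst y has_real_derivative w' t) (at t within {-h..}) \<and> (snd y has_real_derivative v' t) (at t within {-h..})"
    and ode: "\<And>t. t > 0 \<Longrightarrow> w' t = q (snd y t) * fst y t \<and> v' t = j (seg h y t) - \<mu> * snd y t"
    and y0: "seg h y 0 = (a, b)"
    using ys unfolding is_sol_def by blast
  have init: "fst y \<theta> = a \<theta> \<and> snd y \<theta> = b \<theta>" if th: "\<theta> \<in> {-h..0}" for \<theta>
  proof -
    have "fst (seg h y 0) \<theta> = a \<theta>" "snd (seg h y 0) \<theta> = b \<theta>" using y0 by simp_all
    then show ?thesis using th by (simp add: seg_def)
  qed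
  have nn: "fst y r \<ge> 0 \<and> snd y r \<ge> 0" if r: "r \<ge> -h" for r
  proof -
    define s0 where "s0 = max r 0"
    have s0: "s0 \<ge> 0" "r - s0 \<in> {-h..0}" using r hpos by (auto simp: s0_def)
    have "seg h y s0 \<in> Uplus h" using yX[OF s0(1)] by (simp add: Xplus_def)
    then have "fst (seg h y s0) (r - s0) \<ge> 0 \<and> snd (seg h y s0) (r - s0) \<ge> 0"
      using s0(2) unfolding Uplus_def by blast
    then show ?thesis using s0(2) by (simp add: seg_def)
  qed
  define Wt where "Wt = (\<lambda>t. if t \<le> 0 then b t else snd y t)"
  have eqWt: "Wt t = snd y t" if "t \<ge> -h" for t
    using init[of t] that by (auto simp: Wt_def)
  have gWt: "good Wt v'"
    unfolding good_def
  proof (intro conjI allI impI)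
    show "continuous_on {-h..} v'" by (rule vc)
    fix t :: real
    show "t \<le> 0 \<Longrightarrow> Wt t = b t" by (simp add: Wt_def)
    show "t \<ge> 0 \<Longrightarrow> Wt t \<ge> 0" using nn[of t] hpos b_nn'[of 0] by (simp add: Wt_def)
    assume t: "t \<ge> -h"
    have "(snd y has_real_derivative v' t) (at t within {-h..})" using dd[OF t] by blast
    from has_field_derivative_transform_within[OF this zero_less_one, of Wt] t eqWt
    show "(Wt has_real_derivative v' t) (at t within {-h..})" by auto
  qed
  define I where "I = (\<lambda>s. integral {0..s} (\<lambda>\<sigma>. q (Wt \<sigma>)))"
  have Y1: "fst y t = Wp Wt t" if t: "t \<ge> 0" for t
  proof -
    let ?F = "\<lambda>s. fst y s * exp (- I s)"
    have "?F t = ?F 0"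
    proof (rule zero_deriv_const[OF t, of _ "\<lambda>x. w' x * exp (- I x) + fst y x * (exp (- I x) * (- q (Wt x)))"])
      fix x assume x: "x \<in> {0..t}"
      have d1: "(fst y has_real_derivative w' x) (at x within {0..t})"
        by (rule has_field_derivative_subset[of _ _ _ "{-h..}"]) (use dd[of x] x hpos in auto)
      have d2: "(I has_real_derivative q (Wt x)) (at x within {0..t})"
        unfolding I_def by (rule has_field_derivative_subset[OF FTC0[OF qV_cont[OF gWt]]]) (use x in auto)
      have d3: "((\<lambda>s. exp (- I s)) has_real_derivative exp (- I x) * (- q (Wt x))) (at x within {0..t})"
        by (rule DERIV_chain2[OF DERIV_exp DERIV_minus[OF d2], unfolded o_def])
      show "(?F has_real_derivative w' x * exp (- I x) + fst y x * (exp (- I x) * (- q (Wt x)))) (at x within {0..t})"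
        using DERIV_mult[OF d1 d3] by (simp add: algebra_simps)
    next
      fix x assume x: "x \<in> {0<..t}"
      then have "w' x = q (snd y x) * fst y x" "Wt x = snd y x" using ode[of x] hpos eqWt[of x] by auto
      then show "w' x * exp (- I x) + fst y x * (exp (- I x) * (- q (Wt x))) = 0" by (simp add: algebra_simps)
    qed
    moreover have "I 0 = 0" by (simp add: I_def)
    moreover have "fst y 0 = a 0" using init[of 0] hpos by simp
    ultimately have "fst y t * exp (- I t) = a 0" by simp
    then have "fst y t = a 0 * exp (I t)" by (simp add: exp_minus field_simps)
    then show ?thesis by (simp add: Wp_def I_def)
  qed
  have fy: "fst y r = Wf Wt r" if r: "r \<ge> -h" for r
    using init[of r] Y1[of r] r by (cases "r \<le> 0") (auto simp: Wf_def Wp_def)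
  have segeq: "seg h y t = seg h (xs Wt) t" if t: "t \<ge> 0" for t
    using fy eqWt t by (auto simp: seg_def xs_def fun_eq_iff)
  have fixW: "Tf Wt = Wt"
  proof
    fix t
    show "Tf Wt t = Wt t"
    proof (cases "t \<le> 0")
      case True then show ?thesis by (simp add: Tf_def Wt_def)
    next
      case False
      then have t: "t \<ge> 0" "t > 0" by auto
      define J where "J = (\<lambda>s. integral {0..s} (\<lambda>\<sigma>. exp (\<mu> * \<sigma>) * gf Wt \<sigma>))"
      let ?G = "\<lambda>s. exp (\<mu> * s) * snd y s - J s"
      have "?G t = ?G 0"
      proof (rule zero_deriv_const[OF t(1), of _ "\<lambda>x. exp (\<mu> * x) * \<mu> * snd y x + exp (\<mu> * x) * v' x - exp (\<mu> * x) * gf Wt x"])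
        fix x assume x: "x \<in> {0..t}"
        have d1: "(snd y has_real_derivative v' x) (at x within {0..t})"
          by (rule has_field_derivative_subset[of _ _ _ "{-h..}"]) (use dd[of x] x hpos in auto)
        have c: "continuous_on {0..} (\<lambda>\<sigma>. exp (\<mu> * \<sigma>) * gf Wt \<sigma>)" by (intro continuous_intros gf_cont[OF gWt])
        have d2: "(J has_real_derivative exp (\<mu> * x) * gf Wt x) (at x within {0..t})"
          unfolding J_def by (rule has_field_derivative_subset[OF FTC0[OF c]]) (use x in auto)
        have d3: "((\<lambda>s. exp (\<mu> * s)) has_real_derivative exp (\<mu> * x) * \<mu>) (at x within {0..t})"
          by (auto intro!: derivative_eq_intros)
        show "(?G has_real_derivative exp (\<mu> * x) * \<mu> * snd y x + exp (\<mu> * x) * v' x - exp (\<mu> * x) * gf Wt x) (at x within {0..t})"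
          using DERIV_diff[OF DERIV_mult[OF d3 d1] d2] by (simp add: algebra_simps)
      next
        fix x assume x: "x \<in> {0<..t}"
        then have "v' x = j (seg h y x) - \<mu> * snd y x" using ode[of x] by auto
        moreover have "j (seg h y x) = gf Wt x" using segeq[of x] x by (simp add: gf_def)
        ultimately have vx: "v' x = gf Wt x - \<mu> * snd y x" by simp
        show "exp (\<mu> * x) * \<mu> * snd y x + exp (\<mu> * x) * v' x - exp (\<mu> * x) * gf Wt x = 0"
          unfolding vx by (simp add: algebra_simps)
      qed
      moreover have "J 0 = 0" by (simp add: J_def)
      moreover have "snd y 0 = b 0" using init[of 0] hpos by simp
      ultimately have "exp (\<mu> * t) * snd y t - J t = b 0" by simp
      then have "snd y t = exp (- \<mu> * t) * (b 0 + J t)"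
        by (simp add: exp_minus field_simps)
      then show ?thesis using t by (simp add: Tf_def Tp_def Wt_def J_def)
    qed
  qed
  have WV: "Wt = Vs"
  proof
    fix t
    show "Wt t = Vs t"
    proof (cases "t \<le> 0")
      case True then show ?thesis by (simp add: Wt_def Vs_def)
    next
      case False then show ?thesis using fix_unique[OF gWt fixW, of t] by simp
    qed
  qed
  show ?thesis using segeq[OF s] WV by simp
qed

lemma Splus_eq:
  assumes t: "t \<ge> 0"
  shows "Splus h Rm q j \<mu> t (a, b) = seg h (xs Vs) t"
  unfolding Splus_def
proof (rule the_equality)
  show "\<exists>x. is_sol h Rm q j \<mu> (a, b) x \<and> (\<forall>s\<ge>0. seg h x s \<in> Xplus h Rm q j \<mu>) \<and> seg h (xs Vs) t = seg h x t"
    using Vs_sol Vs_Xplus by blast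
  fix y0 assume "\<exists>x. is_sol h Rm q j \<mu> (a, b) x \<and> (\<forall>s\<ge>0. seg h x s \<in> Xplus h Rm q j \<mu>) \<and> y0 = seg h x t"
  then obtain x where x: "is_sol h Rm q j \<mu> (a, b) x" "\<forall>s\<ge>0. seg h x s \<in> Xplus h Rm q j \<mu>" "y0 = seg h x t" by blast
  show "y0 = seg h (xs Vs) t" using sol_unique[OF x(1) _ t] x(2,3) by blast
qed

end

context cellphi begin

lemma Wf_Vs: "t \<ge> 0 \<Longrightarrow> Wf Vs t = a 0 * exp (integral {0..t} (\<lambda>s. q (Vs s)))"
  by (cases "t = 0") (auto simp: Wf_def Wp_def)

lemma seg0_vals: "fst (seg h (xs V) t) 0 = Wf V t" "snd (seg h (xs V) t) 0 = V t"
  using hpos by (simp_all add: seg_fst seg_snd)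

lemma main_rho1: "(\<forall>t\<ge>0. rho1 (Splus h Rm q j \<mu> t (a, b)) = 0) \<longleftrightarrow> a 0 = 0"
proof
  assume "\<forall>t\<ge>0. rho1 (Splus h Rm q j \<mu> t (a, b)) = 0"
  then have "rho1 (Splus h Rm q j \<mu> 0 (a, b)) = 0" by simp
  then show "a 0 = 0" using Splus_eq[of 0] seg0_vals(1)[of Vs 0] by (simp add: rho1_def Wf_def)
next
  assume a0: "a 0 = 0"
  show "\<forall>t\<ge>0. rho1 (Splus h Rm q j \<mu> t (a, b)) = 0"
    using Splus_eq seg0_vals(1) Wf_Vs a0 by (simp add: rho1_def)
qed

lemma main_rhom:
  assumes q0: "q 0 > 0"
    and KK: "\<exists>K. \<forall>\<phi>\<in>Uplus h. (\<forall>\<theta>\<in>{-h..0}. fst \<phi> \<theta> \<ge> K) \<longrightarrow> j (fst \<phi>, \<lambda>_. 0) > 0"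
  shows "(\<forall>t\<ge>0. rhom (Splus h Rm q j \<mu> t (a, b)) = 0) \<longleftrightarrow> a 0 = 0"
proof
  assume a0: "a 0 = 0"
  show "\<forall>t\<ge>0. rhom (Splus h Rm q j \<mu> t (a, b)) = 0"
  proof (intro allI impI)
    fix t :: real assume t: "t \<ge> 0"
    have "Wf Vs t = 0" using Wf_Vs[OF t] a0 by simp
    moreover have "Vs t \<ge> 0" by (rule good_nn[OF Vs_good])
    ultimately show "rhom (Splus h Rm q j \<mu> t (a, b)) = 0"
      using Splus_eq[OF t] seg0_vals[of Vs t] by (simp add: rhom_def)
  qed
next
  assume H: "\<forall>t\<ge>0. rhom (Splus h Rm q j \<mu> t (a, b)) = 0"
  show "a 0 = 0"
  proof (rule ccontr)
    assume "a 0 \<noteq> 0"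
    then have a0: "a 0 > 0" using a_nn'[of 0] by simp
    have Wpos: "Wf Vs t > 0" if "t \<ge> 0" for t using Wf_Vs[OF that] a0 by simp
    have V0: "Vs t = 0" if t: "t \<ge> 0" for t
    proof -
      have "rhom (Splus h Rm q j \<mu> t (a, b)) = 0" using H t by blast
      then have "min (Wf Vs t) (Vs t) = 0" unfolding Splus_eq[OF t] rhom_def seg0_vals .
      then show ?thesis using Wpos[OF t] good_nn[OF Vs_good, of t] by (simp add: min_def split: if_splits)
    qed
    have g0: "gf Vs t = 0" if t: "t > 0" for t
    proof -
      have t': "t \<ge> -h" using t hpos by simp
      have D1: "(Vs has_real_derivative Vs' t) (at t within {-h..})" by (rule goodD(3)[OF Vs_good t'])
      have D2: "(Vs has_real_derivative 0) (at t within {-h..})"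
      proof (rule has_field_derivative_transform_within[OF DERIV_const t])
        show "t \<in> {-h..}" using t' by simp
        fix x assume "x \<in> {-h..}" "dist x t < t"
        then have "x > 0" by (auto simp: dist_real_def)
        then show "0 = Vs x" using V0[of x] by simp
      qed
      have nb: "at t within {-h..} \<noteq> bot"
        by (rule nb_within[of t "{-h..}" "-h"]) (use t' t hpos in auto)
      have "Vs' t = 0" by (rule has_field_derivative_unique[OF D1 D2 nb])
      moreover have "Fg Glim t = 0" using V0[of t] t by (simp add: Vs_def)
      ultimately have "Glim t = 0" using t by (simp add: Vs'_def)
      then show ?thesis using gVs[of t] t by simp
    qed
    have Wexp: "Wf Vs t = a 0 * exp (q 0 * t)" if t: "t \<ge> 0" for t
    proof -
      have "integral {0..t} (\<lambda>s. q (Vs s)) = integral {0..t} (\<lambda>s. q 0)"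
        by (rule integral_cong) (simp add: V0)
      also have "\<dots> = q 0 * t" using t by simp
      finally show ?thesis using Wf_Vs[OF t] by simp
    qed
    obtain K where K: "\<And>\<phi>. \<phi> \<in> Uplus h \<Longrightarrow> (\<forall>\<theta>\<in>{-h..0}. fst \<phi> \<theta> \<ge> K) \<Longrightarrow> j (fst \<phi>, \<lambda>_. 0) > 0"
      using KK by blast
    define T where "T = h + \<bar>K\<bar> / (a 0 * q 0)"
    have aq: "a 0 * q 0 > 0" using a0 q0 by simp
    have Kq: "\<bar>K\<bar> / (a 0 * q 0) \<ge> 0" using aq by simp
    have T0: "T > 0" "T \<ge> h" using hpos Kq unfolding T_def by linarith+
    let ?\<phi> = "seg h (xs Vs) T"
    have U: "?\<phi> \<in> Uplus h" by (rule seg_props(1)[OF Vs_good]) (use T0 in simp)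
    have big: "fst ?\<phi> \<theta> \<ge> K" if th: "\<theta> \<in> {-h..0}" for \<theta>
    proof -
      have r: "T + \<theta> \<ge> \<bar>K\<bar> / (a 0 * q 0)" using th by (simp add: T_def)
      have r0: "T + \<theta> \<ge> 0" using r aq by (meson abs_ge_zero divide_nonneg_pos order_trans)
      have "fst ?\<phi> \<theta> = a 0 * exp (q 0 * (T + \<theta>))" using th Wexp[OF r0] by (simp add: seg_fst)
      also have "\<dots> \<ge> a 0 * (q 0 * (T + \<theta>))"
      proof -
        have "q 0 * (T + \<theta>) \<le> exp (q 0 * (T + \<theta>))"
          using exp_ge_add_one_self[of "q 0 * (T + \<theta>)"] by linarith
        then show ?thesis using a0 by (intro mult_left_mono) auto
      qed
      also have "a 0 * (q 0 * (T + \<theta>)) = (a 0 * q 0) * (T + \<theta>)" by simp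
      also have "\<dots> \<ge> (a 0 * q 0) * (\<bar>K\<bar> / (a 0 * q 0))" using r aq by (intro mult_left_mono) auto
      also have "(a 0 * q 0) * (\<bar>K\<bar> / (a 0 * q 0)) = \<bar>K\<bar>" using a0 q0 by simp
      finally show ?thesis by linarith
    qed
    have sndz: "snd ?\<phi> = (\<lambda>_. 0)"
    proof
      fix s
      show "snd ?\<phi> s = 0"
      proof (cases "s \<in> {-h..0}")
        case True
        then have "T + s \<ge> 0" using T0 by auto
        then show ?thesis using True V0 by (simp add: seg_snd)
      qed (auto simp: seg_snd)
    qed
    have "j (fst ?\<phi>, \<lambda>_. 0) > 0" using K[OF U] big by blast
    moreover have "(fst ?\<phi>, \<lambda>_. 0) = ?\<phi>" using sndz by (metis prod.collapse)
    moreover have "j ?\<phi> = 0" using g0[OF T0(1)] by (simp add: gf_def)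
    ultimately show False by simp
  qed
qed

end

theorem lemma19:
  fixes h Rm \<mu> :: real and q :: "real \<Rightarrow> real" and j :: "state \<Rightarrow> real"
  assumes "h > 0" and "Rm < 0" and "\<mu> \<ge> 0"
    and "H1 h Rm j" and "H2 Rm q" and "Xplus h Rm q j \<mu> \<noteq> {}"
    and "\<exists>\<phi>\<in>Xplus h Rm q j \<mu>. min (fst \<phi> 0) (snd \<phi> 0) > 0"
    and "q 0 > 0"
    and "j (\<lambda>_. 0, \<lambda>_. 0) = 0"
    and "\<exists>K. \<forall>\<phi>\<in>Uplus h. (\<forall>\<theta>\<in>{-h..0}. fst \<phi> \<theta> \<ge> K) \<longrightarrow> j (fst \<phi>, \<lambda>_. 0) > 0"
  shows "X0 h Rm q j \<mu> rho1 = {\<phi>\<in>Xplus h Rm q j \<mu>. fst \<phi> 0 = 0} \<and>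
         X0 h Rm q j \<mu> rhom = {\<phi>\<in>Xplus h Rm q j \<mu>. fst \<phi> 0 = 0}"
proof -
  have loc: "cellphi h Rm \<mu> q j (fst \<phi>) (snd \<phi>)" if "\<phi> \<in> Xplus h Rm q j \<mu>" for \<phi>
    using assms(1-5) that by unfold_locales auto
  have A: "X0 h Rm q j \<mu> rho1 = {\<phi>\<in>Xplus h Rm q j \<mu>. fst \<phi> 0 = 0}"
  proof (rule set_eqI)
    fix \<phi>
    show "\<phi> \<in> X0 h Rm q j \<mu> rho1 \<longleftrightarrow> \<phi> \<in> {\<phi>\<in>Xplus h Rm q j \<mu>. fst \<phi> 0 = 0}"
    proof (cases "\<phi> \<in> Xplus h Rm q j \<mu>")
      case True
      from cellphi.main_rho1[OF loc[OF True]] show ?thesis using True by (simp add: X0_def)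
    qed (simp add: X0_def)
  qed
  have B: "X0 h Rm q j \<mu> rhom = {\<phi>\<in>Xplus h Rm q j \<mu>. fst \<phi> 0 = 0}"
  proof (rule set_eqI)
    fix \<phi>
    show "\<phi> \<in> X0 h Rm q j \<mu> rhom \<longleftrightarrow> \<phi> \<in> {\<phi>\<in>Xplus h Rm q j \<mu>. fst \<phi> 0 = 0}"
    proof (cases "\<phi> \<in> Xplus h Rm q j \<mu>")
      case True
      from cellphi.main_rhom[OF loc[OF True] assms(8) assms(10)] show ?thesis using True by (simp add: X0_def)
    qed (simp add: X0_def)
  qed
  show ?thesis using A B by simp
qed

end
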